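(* Let $n\geqslant 1$. Every partition $\lambda\subset\mathbb N^{3n-1}$ with embedding dimension $3n-1$ and socle type $(0,0,0,n)$ has Hilbert–Samuel function either $(1,3n-1,3n,n)$ or $(1,3n-1,3n-1,n)$. Moreover \[ \alpha^{3n-1}_{3n,n,3}=\frac{3(n-1)}{2}\cdot\frac{(3n)!}{6^n n!},\qquad \alpha^{3n-1}_{3n-1,n,3}=2\cdot\frac{(3n)!}{6^n n!}. \]
   Context: Let $\mathbb N=\mathbb Z_{\geqslant 0}$ with the componentwise order. A partition in $\mathbb N^k$ is a finite subset $\lambda\subset\mathbb N^k$ closed downward; $\mathrm P^k_d$ is the set of those of size $d$. The degree of a point is the sum of its coordinates; $\lambda_{=i}$, $\lambda_{\geqslant i}$ are the elements of degree $i$, resp. $\geqslant i$; the Hilbert–Samuel function is $h_\lambda(i)=|\lambda_{=i}|$, written as the tuple $(h_\lambda(0),\dots,h_\lambda(\ell))$ with $\ell=\ell(\lambda)$ the maximal degree (the length); $h_\lambda(1)$ is the embedding dimension. $\mathrm{Soc}(\lambda)$ is the set of maximal elements; socle type $(0,0,0,n)$ means all elements of $\mathrm{Soc}(\lambda)$ have degree $3$ and there are exactly $n$ of them. For positive integers $k,q,m$, an M-partition of type $(k,q,m)$ is $\lambda\in\mathrm P^k_{1+k+q+m}$ with $\mathrm{Soc}(\lambda)\subset\lambda_{\geqslant3}$, $h_\lambda(1)=k$, $h_\lambda(2)=q$, $\sum_{i\geqslant3}h_\lambda(i)=m$; $\alpha^k_{q,m,\ell}$ is the number of M-partitions of type $(k,q,m)$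 and length $\ell$. *)

theory Defs
  imports Complex_Main
begin

definition pts :: "nat \<Rightarrow> nat list set" where
  "pts k = {x. length x = k}"

definition le_pt :: "nat list \<Rightarrow> nat list \<Rightarrow> bool" where
  "le_pt x y \<longleftrightarrow> list_all2 (\<le>) x y"

definition is_partition :: "nat \<Rightarrow> nat list set \<Rightarrow> bool" where
  "is_partition k P \<longleftrightarrow> finite P \<and> P \<subseteq> pts k \<and>
     (\<forall>x\<in>P. \<forall>y\<in>pts k. le_pt y x \<longrightarrow> y \<in> P)"

definition deg :: "nat list \<Rightarrow> nat" where
  "deg x = sum_list x"

definition hilb :: "nat list set \<Rightarrow> nat \<Rightarrow> nat" where
  "hilb P i = card {x\<in>P. deg x = i}"

definition plength :: "nat list set \<Rightarrow> nat" where
  "plength P = Max (deg ` P)"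

definition socle :: "nat list set \<Rightarrow> nat list set" where
  "socle P = {x\<in>P. \<forall>y\<in>P. le_pt x y \<longrightarrow> y = x}"

definition socle_type_0003 :: "nat list set \<Rightarrow> nat \<Rightarrow> bool" where
  "socle_type_0003 P n \<longleftrightarrow> (\<forall>x\<in>socle P. deg x = 3) \<and> card (socle P) = n"

definition M_partition :: "nat \<Rightarrow> nat \<Rightarrow> nat \<Rightarrow> nat list set \<Rightarrow> bool" where
  "M_partition k q m P \<longleftrightarrow> is_partition k P \<and> card P = 1 + k + q + m \<and>
     socle P \<subseteq> {x\<in>P. deg x \<ge> 3} \<and> hilb P 1 = k \<and> hilb P 2 = q \<and>
     card {x\<in>P. deg x \<ge> 3} = m"

definition alpha :: "nat \<Rightarrow> nat \<Rightarrow> nat \<Rightarrow> nat \<Rightarrow> nat" where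
  "alpha k q m l = card {P. M_partition k q m P \<and> plength P = l}"

end

theory Submission
  imports Defs
begin
definition supp :: "nat list \<Rightarrow> nat set" where
  "supp x = {i. i < length x \<and> 0 < x!i}"

definition ind :: "nat \<Rightarrow> nat set \<Rightarrow> nat list" where
  "ind k B = map (\<lambda>i. if i \<in> B then 1 else 0) [0..<k]"

lemma le_pt_nth: "le_pt x y \<longleftrightarrow> length x = length y \<and> (\<forall>i<length y. x!i \<le> y!i)"
  unfolding le_pt_def list_all2_conv_all_nth by auto

lemma le_pt_refl: "le_pt x x" by (simp add: le_pt_nth)
lemma le_pt_trans: "le_pt x y \<Longrightarrow> le_pt y z \<Longrightarrow> le_pt x z"
  by (auto simp: le_pt_nth intro: order_trans)

lemma deg_sum: "deg x = (\<Sum>i<length x. x!i)"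
  by (simp add: deg_def sum_list_sum_nth atLeast0LessThan)

lemma supp_sub: "supp x \<subseteq> {..<length x}" by (auto simp: supp_def)
lemma finite_supp[simp]: "finite (supp x)" using supp_sub finite_subset by blast

lemma deg_supp: "deg x = (\<Sum>i\<in>supp x. x!i)"
proof -
  have "deg x = (\<Sum>i\<in>{..<length x}. x!i)" by (simp add: deg_sum)
  also have "... = (\<Sum>i\<in>supp x. x!i)"
    by (rule sum.mono_neutral_right) (auto simp: supp_def)
  finally show ?thesis .
qed

lemma card_supp_le_deg: "card (supp x) \<le> deg x"
proof -
  have "card (supp x) = (\<Sum>i\<in>supp x. 1)" by simp
  also have "... \<le> (\<Sum>i\<in>supp x. x!i)" by (rule sum_mono) (auto simp: supp_def)
  finally show ?thesis by (simp add: deg_supp)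
qed

lemma card_supp_eq_deg: "card (supp x) = deg x \<Longrightarrow> i < length x \<Longrightarrow> x!i \<le> 1"
proof (rule ccontr)
  assume h: "card (supp x) = deg x" "i < length x" "\<not> x!i \<le> 1"
  have i: "i \<in> supp x" using h by (auto simp: supp_def)
  have "(\<Sum>j\<in>supp x. 1) < (\<Sum>j\<in>supp x. x!j)"
    by (rule sum_strict_mono_ex1) (use h i in \<open>auto simp: supp_def\<close>)
  then show False using h(1) by (simp add: deg_supp)
qed

lemma deg_01: "(\<And>i. i < length x \<Longrightarrow> x!i \<le> 1) \<Longrightarrow> deg x = card (supp x)"
proof -
  assume h: "\<And>i. i < length x \<Longrightarrow> x!i \<le> 1"
  have "deg x = (\<Sum>i\<in>supp x. 1)"
    unfolding deg_supp by (rule sum.cong) (auto simp: supp_def dest: h)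
  then show ?thesis by simp
qed

lemma ind_length[simp]: "length (ind k B) = k" by (simp add: ind_def)
lemma ind_nth[simp]: "i < k \<Longrightarrow> ind k B ! i = (if i \<in> B then 1 else 0)" by (simp add: ind_def)
lemma supp_ind[simp]: "supp (ind k B) = B \<inter> {..<k}" by (auto simp: supp_def split: if_splits)

lemma ind_supp: "(\<And>i. i < length x \<Longrightarrow> x!i \<le> 1) \<Longrightarrow> ind (length x) (supp x) = x"
proof (rule nth_equalityI)
  fix i assume h: "\<And>i. i < length x \<Longrightarrow> x!i \<le> 1" and i: "i < length (ind (length x) (supp x))"
  then have "x!i \<le> 1" using h by simp
  then show "ind (length x) (supp x) ! i = x ! i" using i by (auto simp: supp_def)
qed simp

lemma deg_ind: "B \<subseteq> {..<k} \<Longrightarrow> deg (ind k B) = card B"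
proof -
  assume "B \<subseteq> {..<k}"
  then have "deg (ind k B) = card (supp (ind k B))" by (intro deg_01) auto
  then show ?thesis using \<open>B \<subseteq> {..<k}\<close> by (simp add: Int_absorb2)
qed

lemma ind_inj: "B \<subseteq> {..<k} \<Longrightarrow> B' \<subseteq> {..<k} \<Longrightarrow> ind k B = ind k B' \<Longrightarrow> B = B'"
  by (metis Int_absorb2 supp_ind)

lemma le_pt_supp: "le_pt y x \<Longrightarrow> supp y \<subseteq> supp x"
  by (auto simp: le_pt_nth supp_def)

lemma le_pt_deg: "le_pt y x \<Longrightarrow> deg y \<le> deg x"
  by (auto simp: le_pt_nth deg_sum intro!: sum_mono)

lemma le_pt_deg_eq: "le_pt y x \<Longrightarrow> deg y = deg x \<Longrightarrow> y = x"
proof (rule ccontr)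
  assume h: "le_pt y x" "deg y = deg x" "y \<noteq> x"
  then have l: "length y = length x" and le: "\<forall>i<length x. y!i \<le> x!i" by (auto simp: le_pt_nth)
  then obtain i where i: "i < length x" "y!i \<noteq> x!i" using h(3) nth_equalityI by metis
  have "(\<Sum>j<length x. y!j) < (\<Sum>j<length x. x!j)"
    by (rule sum_strict_mono_ex1) (use le i in \<open>auto intro: le_neq_implies_less\<close>)
  then show False using h(2) l by (simp add: deg_sum)
qed

lemma deg_diff: "le_pt y x \<Longrightarrow> deg x = deg y + (\<Sum>j<length x. x!j - y!j)"
proof -
  assume h: "le_pt y x"
  then have l: "length y = length x" and le: "\<forall>i<length x. y!i \<le> x!i" by (auto simp: le_pt_nth)
  have "(\<Sum>j<length x. x!j) = (\<Sum>j<length x. y!j + (x!j - y!j))"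
    by (rule sum.cong) (use le in auto)
  also have "... = (\<Sum>j<length x. y!j) + (\<Sum>j<length x. x!j - y!j)" by (simp add: sum.distrib)
  finally show ?thesis using l by (simp add: deg_sum)
qed

lemma sum_eq_1_nat:
  assumes "finite A" "(\<Sum>j\<in>A. g j) = (1::nat)"
  shows "\<exists>i\<in>A. g i = 1 \<and> (\<forall>j\<in>A. j \<noteq> i \<longrightarrow> g j = 0)"
proof -
  obtain i where i: "i \<in> A" "g i \<noteq> 0" using assms by (metis sum.neutral zero_neq_one)
  have "(\<Sum>j\<in>A. g j) = g i + (\<Sum>j\<in>A-{i}. g j)" using i assms(1) by (simp add: sum.remove)
  then have "g i = 1" "(\<Sum>j\<in>A-{i}. g j) = 0" using i assms(2) by linarith+
  then show ?thesis using i assms(1) by auto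
qed

definition Dset :: "nat \<Rightarrow> nat list \<Rightarrow> nat \<Rightarrow> nat list set" where
  "Dset k x d = {y\<in>pts k. le_pt y x \<and> deg y = d}"

lemma deg_upd: "i < length x \<Longrightarrow> 0 < x!i \<Longrightarrow> deg (x[i := x!i - 1]) + 1 = deg x"
proof -
  assume i: "i < length x" "0 < x!i"
  have le: "le_pt (x[i := x!i - 1]) x" using i by (auto simp: le_pt_nth nth_list_update)
  have "(\<Sum>j<length x. x!j - x[i := x!i - 1]!j) = (\<Sum>j<length x. if j = i then 1 else 0)"
    by (rule sum.cong) (use i in \<open>auto simp: nth_list_update\<close>)
  also have "... = 1" using i by simp
  finally show ?thesis using deg_diff[OF le] by simp
qed

lemma card_Dset:
  assumes x: "length x = k" "deg x = d + 1"
  shows "card (Dset k x d) = card (supp x)"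
proof -
  define f where "f i = x[i := x!i - 1]" for i
  have "bij_betw f (supp x) (Dset k x d)"
  proof (rule bij_betwI')
    fix i j assume ij: "i \<in> supp x" "j \<in> supp x"
    show "(f i = f j) = (i = j)"
    proof
      assume e: "f i = f j"
      show "i = j"
      proof (rule ccontr)
        assume "i \<noteq> j"
        then have "f j ! i = x!i" using ij by (simp add: f_def supp_def)
        moreover have "f i ! i = x!i - 1" using ij by (simp add: f_def supp_def)
        ultimately show False using e ij by (auto simp: supp_def)
      qed
    qed simp
  next
    fix i assume i: "i \<in> supp x"
    then have i2: "i < length x" "0 < x!i" by (auto simp: supp_def)
    have "deg (f i) = d" using deg_upd[OF i2] x by (simp add: f_def)
    moreover have "le_pt (f i) x" using i2 by (simp add: le_pt_nth f_def nth_list_update)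
    moreover have "length (f i) = k" using x by (simp add: f_def)
    ultimately show "f i \<in> Dset k x d" by (simp add: Dset_def pts_def)
  next
    fix y assume "y \<in> Dset k x d"
    then have y: "le_pt y x" "deg y = d" "length y = k" by (auto simp: Dset_def pts_def)
    then have "(\<Sum>j<length x. x!j - y!j) = 1" using deg_diff[OF y(1)] x by simp
    then have "\<exists>i\<in>{..<length x}. x!i - y!i = 1 \<and> (\<forall>j\<in>{..<length x}. j \<noteq> i \<longrightarrow> x!j - y!j = 0)"
      by (intro sum_eq_1_nat) auto
    then obtain i where i: "i < length x" "x!i - y!i = 1" "\<forall>j<length x. j \<noteq> i \<longrightarrow> x!j - y!j = 0"
      by blast
    have le: "\<forall>j<length x. y!j \<le> x!j" using y(1) by (auto simp: le_pt_nth)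
    have "y = f i"
    proof (rule nth_equalityI)
      show "length y = length (f i)" using y x by (simp add: f_def)
      fix j assume "j < length y"
      then show "y ! j = f i ! j" using i le y x
        by (cases "j = i") (auto simp: f_def nth_list_update intro: order.antisym)
    qed
    moreover have "i \<in> supp x" using i by (auto simp: supp_def)
    ultimately show "\<exists>i\<in>supp x. y = f i" by blast
  qed
  then show ?thesis by (simp add: bij_betw_same_card)
qed

lemma entries_le_deg: "i < length x \<Longrightarrow> x!i \<le> deg x"
  by (simp add: deg_def elem_le_sum_list)

lemma small_deg_ind: "deg x \<le> 1 \<Longrightarrow> x = ind (length x) (supp x) \<and> deg x = card (supp x)"
proof -
  assume "deg x \<le> 1"
  then have h: "\<And>i. i < length x \<Longrightarrow> x!i \<le> 1" using entries_le_deg order_trans by blast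
  show ?thesis using ind_supp[OF h] deg_01[OF h] by simp
qed

definition down :: "nat \<Rightarrow> nat list set \<Rightarrow> nat list set" where
  "down k S = {y\<in>pts k. \<exists>s\<in>S. le_pt y s}"

definition good :: "nat \<Rightarrow> nat \<Rightarrow> nat list set \<Rightarrow> bool" where
  "good k n S \<longleftrightarrow> S \<subseteq> pts k \<and> (\<forall>s\<in>S. deg s = 3) \<and> card S = n \<and>
     (\<forall>i<k. \<exists>s\<in>S. i \<in> supp s)"

context
  fixes k :: nat and S :: "nat list set"
  assumes Sp: "S \<subseteq> pts k" and S3: "\<forall>s\<in>S. deg s = 3" and Sf: "finite S"
begin

lemma down_deg: "y \<in> down k S \<Longrightarrow> deg y \<le> 3"
  using S3 le_pt_deg by (force simp: down_def)

lemma finite_down: "finite (down k S)"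
proof -
  have "down k S \<subseteq> {xs. set xs \<subseteq> {0..3} \<and> length xs = k}"
  proof
    fix y assume y: "y \<in> down k S"
    then have "deg y \<le> 3" by (rule down_deg)
    moreover have "length y = k" using y by (auto simp: down_def pts_def)
    ultimately show "y \<in> {xs. set xs \<subseteq> {0..3} \<and> length xs = k}"
      by (auto simp: in_set_conv_nth deg_def dest!: elem_le_sum_list)
  qed
  then show ?thesis by (rule finite_subset) (simp add: finite_lists_length_eq)
qed

lemma partition_down: "is_partition k (down k S)"
  unfolding is_partition_def using finite_down
  by (auto simp: down_def intro: le_pt_trans)

lemma down_S: "S \<subseteq> down k S" using Sp by (auto simp: down_def intro: le_pt_refl)

lemma socle_down: "socle (down k S) = S"
proof
  show "socle (down k S) \<subseteq> S"
  proof
    fix x assume x: "x \<in> socle (down k S)"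
    then obtain s where s: "s \<in> S" "le_pt x s" by (auto simp: socle_def down_def)
    then have "s = x" using x down_S by (auto simp: socle_def)
    then show "x \<in> S" using s by simp
  qed
next
  show "S \<subseteq> socle (down k S)"
  proof
    fix s assume s: "s \<in> S"
    have "y = s" if "y \<in> down k S" "le_pt s y" for y
      using le_pt_deg_eq[OF that(2)] le_pt_deg[OF that(2)] down_deg[OF that(1)] S3 s by auto
    then show "s \<in> socle (down k S)" using s down_S by (auto simp: socle_def)
  qed
qed

lemma down_deg3: "{x\<in>down k S. deg x = 3} = S"
proof
  show "{x\<in>down k S. deg x = 3} \<subseteq> S"
  proof
    fix x assume "x \<in> {x\<in>down k S. deg x = 3}"
    then obtain s where "s \<in> S" "le_pt x s" "deg x = 3" by (auto simp: down_def)
    then show "x \<in> S" using le_pt_deg_eq S3 by metis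
  qed
qed (use down_S S3 in auto)

lemma down_deg2: "{x\<in>down k S. deg x = 2} = (\<Union>s\<in>S. Dset k s 2)"
  by (auto simp: down_def Dset_def)

lemma down_deg0: "S \<noteq> {} \<Longrightarrow> {x\<in>down k S. deg x = 0} = {ind k {}}"
proof
  assume "S \<noteq> {}"
  then obtain s where s: "s \<in> S" by auto
  then have "le_pt (ind k {}) s" using Sp by (auto simp: le_pt_nth pts_def)
  then show "{ind k {}} \<subseteq> {x\<in>down k S. deg x = 0}" using s by (auto simp: down_def pts_def deg_ind)
next
  show "{x\<in>down k S. deg x = 0} \<subseteq> {ind k {}}"
  proof
    fix x assume x: "x \<in> {x\<in>down k S. deg x = 0}"
    then have "x = ind (length x) (supp x)" "card (supp x) = 0" using small_deg_ind[of x] by auto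
    moreover have "length x = k" using x by (auto simp: down_def pts_def)
    ultimately show "x \<in> {ind k {}}" by simp
  qed
qed

lemma down_deg1: "(\<forall>i<k. \<exists>s\<in>S. i \<in> supp s) \<Longrightarrow> {x\<in>down k S. deg x = 1} = (\<lambda>i. ind k {i}) ` {..<k}"
proof
  assume cov: "\<forall>i<k. \<exists>s\<in>S. i \<in> supp s"
  show "(\<lambda>i. ind k {i}) ` {..<k} \<subseteq> {x\<in>down k S. deg x = 1}"
  proof
    fix x assume "x \<in> (\<lambda>i. ind k {i}) ` {..<k}"
    then obtain i where i: "i < k" "x = ind k {i}" by auto
    then obtain s where s: "s \<in> S" "i \<in> supp s" using cov by auto
    then have "le_pt x s" using i Sp by (auto simp: le_pt_nth pts_def supp_def)
    then show "x \<in> {x\<in>down k S. deg x = 1}" using s i by (auto simp: down_def pts_def deg_ind)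
  qed
next
  show "{x\<in>down k S. deg x = 1} \<subseteq> (\<lambda>i. ind k {i}) ` {..<k}"
  proof
    fix x assume x: "x \<in> {x\<in>down k S. deg x = 1}"
    then have e: "x = ind (length x) (supp x)" "card (supp x) = 1" using small_deg_ind[of x] by auto
    then obtain i where "supp x = {i}" by (auto simp: card_Suc_eq)
    moreover have "length x = k" using x by (auto simp: down_def pts_def)
    ultimately show "x \<in> (\<lambda>i. ind k {i}) ` {..<k}" using e supp_sub[of x] by auto
  qed
qed

lemma card_down: "card (down k S) = (\<Sum>i\<le>3. card {x\<in>down k S. deg x = i})"
proof -
  have "down k S = (\<Union>i\<in>{..3}. {x\<in>down k S. deg x = i})" using down_deg by auto
  then have "card (down k S) = card (\<Union>i\<in>{..3}. {x\<in>down k S. deg x = i})" by simp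
  also have "... = (\<Sum>i\<le>3. card {x\<in>down k S. deg x = i})"
    by (rule card_UN_disjoint) (use finite_down in auto)
  finally show ?thesis .
qed

lemma plength_down: "S \<noteq> {} \<Longrightarrow> plength (down k S) = 3"
proof -
  assume "S \<noteq> {}"
  then obtain s where "s \<in> S" by auto
  then have "3 \<in> deg ` down k S" using down_S S3 by force
  moreover have "finite (deg ` down k S)" using finite_down by simp
  moreover have "\<forall>y\<in>deg ` down k S. y \<le> 3" using down_deg by auto
  ultimately show ?thesis unfolding plength_def by (intro Max_eqI) auto
qed

end

lemma partition_socle:
  assumes P: "is_partition k P" and x: "x \<in> P"
  shows "\<exists>y\<in>socle P. le_pt x y"
proof -
  define A where "A = {y\<in>P. le_pt x y}"
  have fA: "finite A" using P by (simp add: A_def is_partition_def)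
  have xA: "x \<in> A" using x by (simp add: A_def le_pt_refl)
  define m where "m = Max (deg ` A)"
  have "m \<in> deg ` A" unfolding m_def using fA xA by (intro Max_in) auto
  then obtain y where y: "y \<in> A" "deg y = m" by auto
  have "y \<in> socle P"
    unfolding socle_def
  proof (intro CollectI conjI ballI impI)
    show "y \<in> P" using y by (simp add: A_def)
    fix z assume z: "z \<in> P" "le_pt y z"
    then have "z \<in> A" using y by (auto simp: A_def intro: le_pt_trans)
    then have "deg z \<le> m" unfolding m_def using fA by (intro Max_ge) auto
    then have "deg y = deg z" using le_pt_deg[OF z(2)] y by simp
    then show "z = y" using le_pt_deg_eq[OF z(2)] by simp
  qed
  then show ?thesis using y by (auto simp: A_def)
qed

lemma socle_sub: "socle P \<subseteq> P" by (auto simp: socle_def)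

lemma G_good:
  assumes P: "is_partition k P" and h1: "hilb P 1 = k" and st: "socle_type_0003 P n"
  shows "good k n (socle P) \<and> P = down k (socle P)"
proof -
  have Pk: "P \<subseteq> pts k" using P by (simp add: is_partition_def)
  have eq: "P = down k (socle P)"
  proof
    show "P \<subseteq> down k (socle P)" using partition_socle[OF P] Pk by (auto simp: down_def)
    show "down k (socle P) \<subseteq> P" using P socle_sub[of P] by (auto simp: down_def is_partition_def)
  qed
  define U where "U = (\<lambda>i. ind k {i}) ` {..<k}"
  have sub: "{x\<in>P. deg x = 1} \<subseteq> U"
  proof
    fix x assume x: "x \<in> {x\<in>P. deg x = 1}"
    then have e: "x = ind (length x) (supp x)" "card (supp x) = 1" using small_deg_ind[of x] by auto
    then obtain i where "supp x = {i}" by (auto simp: card_Suc_eq)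
    moreover have "length x = k" using x Pk by (auto simp: pts_def)
    ultimately show "x \<in> U" using e supp_sub[of x] by (auto simp: U_def)
  qed
  have "inj_on (\<lambda>i. ind k {i}) {..<k}"
    by (rule inj_onI) (use ind_inj in blast)
  then have cU: "card U = k" by (simp add: U_def card_image)
  have "{x\<in>P. deg x = 1} = U"
    by (rule card_subset_eq) (use sub cU h1 in \<open>auto simp: U_def hilb_def\<close>)
  then have uP: "\<And>i. i < k \<Longrightarrow> ind k {i} \<in> P" by (auto simp: U_def)
  have cov: "\<forall>i<k. \<exists>s\<in>socle P. i \<in> supp s"
  proof (intro allI impI)
    fix i assume i: "i < k"
    then obtain s where s: "s \<in> socle P" "le_pt (ind k {i}) s" using partition_socle[OF P uP[OF i]] by auto
    then have "i \<in> supp s" using le_pt_supp[OF s(2)] i by auto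
    then show "\<exists>s\<in>socle P. i \<in> supp s" using s by auto
  qed
  have "good k n (socle P)" unfolding good_def using st cov socle_sub[of P] Pk
    by (auto simp: socle_type_0003_def)
  then show ?thesis using eq by simp
qed

lemma overlap_bound:
  assumes "finite I" "i \<in> I" "j \<in> I" "i \<noteq> j" "\<And>x. x \<in> I \<Longrightarrow> finite (A x)"
  shows "card (\<Union>x\<in>I. A x) + card (A i \<inter> A j) \<le> (\<Sum>x\<in>I. card (A x))"
proof -
  define R where "R = I - {i, j}"
  have fR: "finite R" using assms by (simp add: R_def)
  have "(\<Union>x\<in>I. A x) = (A i \<union> A j) \<union> (\<Union>x\<in>R. A x)" using assms by (auto simp: R_def)
  then have "card (\<Union>x\<in>I. A x) \<le> card (A i \<union> A j) + card (\<Union>x\<in>R. A x)"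
    by (simp add: card_Un_le)
  also have "card (\<Union>x\<in>R. A x) \<le> (\<Sum>x\<in>R. card (A x))" using fR by (rule card_UN_le)
  finally have 1: "card (\<Union>x\<in>I. A x) + card (A i \<inter> A j) \<le> card (A i) + card (A j) + (\<Sum>x\<in>R. card (A x))"
    using card_Un_Int[of "A i" "A j"] assms by simp
  have "(\<Sum>x\<in>I. card (A x)) = card (A i) + (\<Sum>x\<in>I-{i}. card (A x))"
    using assms by (simp add: sum.remove)
  also have "(\<Sum>x\<in>I-{i}. card (A x)) = card (A j) + (\<Sum>x\<in>I-{i}-{j}. card (A x))"
    using assms by (intro sum.remove) auto
  finally have "(\<Sum>x\<in>I. card (A x)) = card (A i) + card (A j) + (\<Sum>x\<in>R. card (A x))"
    by (simp add: R_def Diff_insert2[symmetric])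
  then show ?thesis using 1 by simp
qed

lemma all_eq_max:
  assumes "finite A" "\<forall>x\<in>A. f x \<le> (c::nat)" "sum f A = c * card A" "x \<in> A"
  shows "f x = c"
proof (rule ccontr)
  assume "f x \<noteq> c"
  then have "sum f A < sum (\<lambda>_. c) A"
    using assms by (intro sum_strict_mono_ex1) (auto intro: le_neq_implies_less)
  then show False using assms by simp
qed

definition sig :: "nat list set \<Rightarrow> nat" where
  "sig S = (\<Sum>s\<in>S. card (supp s))"

lemma Dset_supp: "d \<in> Dset k s 2 \<Longrightarrow> supp d \<subseteq> supp s \<and> supp d \<noteq> {}"
  using le_pt_supp[of d s] deg_supp[of d] by (auto simp: Dset_def)

lemma finite_Dset: "finite (Dset k s d)"
proof -
  have "Dset k s d \<subseteq> {xs. set xs \<subseteq> {0..d} \<and> length xs = k}"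
    by (auto simp: Dset_def pts_def in_set_conv_nth deg_def dest!: elem_le_sum_list)
  then show ?thesis by (rule finite_subset) (simp add: finite_lists_length_eq)
qed

context
  fixes k n :: nat and S :: "nat list set"
  assumes g: "good k n S" and n1: "n \<ge> 1" and kn: "k = 3*n - 1"
begin

lemma gS: "S \<subseteq> pts k" "\<And>s. s \<in> S \<Longrightarrow> deg s = 3" "card S = n" "\<forall>i<k. \<exists>s\<in>S. i \<in> supp s"
  using g by (auto simp: good_def)

lemma fS: "finite S" using gS(3) n1 card.infinite by fastforce

lemma lenS: "s \<in> S \<Longrightarrow> length s = k" using gS(1) by (auto simp: pts_def)

lemma Usupp: "(\<Union>s\<in>S. supp s) = {..<k}"
  using gS(4) supp_sub lenS by fastforce

lemma sig_ge: "k \<le> sig S"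
  using card_UN_le[OF fS, of supp] Usupp by (simp add: sig_def)

lemma supp_le3: "s \<in> S \<Longrightarrow> card (supp s) \<le> 3"
  using card_supp_le_deg[of s] gS(2) by simp

lemma sig_le: "sig S \<le> k + 1"
proof -
  have "sig S \<le> (\<Sum>s\<in>S. 3)" unfolding sig_def by (rule sum_mono) (rule supp_le3)
  then show ?thesis using gS(3) kn n1 by simp
qed

lemma cardD: "s \<in> S \<Longrightarrow> card (Dset k s 2) = card (supp s)"
  using card_Dset[of s k 2] lenS gS(2) by simp

lemma disj_case:
  assumes "sig S = k"
  shows "\<forall>s\<in>S. \<forall>s'\<in>S. s \<noteq> s' \<longrightarrow> supp s \<inter> supp s' = {}"
proof (intro ballI impI)
  fix s s' assume s: "s \<in> S" "s' \<in> S" "s \<noteq> s'"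
  have "card (\<Union>x\<in>S. supp x) + card (supp s \<inter> supp s') \<le> sig S"
    unfolding sig_def by (rule overlap_bound) (use fS s in auto)
  then have "card (supp s \<inter> supp s') = 0" using assms Usupp by simp
  then show "supp s \<inter> supp s' = {}" by simp
qed

lemma sq_case:
  assumes "sig S = k + 1"
  shows "\<forall>s\<in>S. card (supp s) = 3"
    and "\<forall>s\<in>S. \<forall>s'\<in>S. s \<noteq> s' \<longrightarrow> card (supp s \<inter> supp s') \<le> 1"
proof -
  show "\<forall>s\<in>S. card (supp s) = 3"
    using all_eq_max[OF fS, of "\<lambda>s. card (supp s)" 3] supp_le3 assms gS(3) kn n1
    by (auto simp: sig_def)
  show "\<forall>s\<in>S. \<forall>s'\<in>S. s \<noteq> s' \<longrightarrow> card (supp s \<inter> supp s') \<le> 1"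
  proof (intro ballI impI)
    fix s s' assume s: "s \<in> S" "s' \<in> S" "s \<noteq> s'"
    have "card (\<Union>x\<in>S. supp x) + card (supp s \<inter> supp s') \<le> sig S"
      unfolding sig_def by (rule overlap_bound) (use fS s in auto)
    then show "card (supp s \<inter> supp s') \<le> 1" using assms Usupp by simp
  qed
qed

lemma h2_eq: "card (\<Union>s\<in>S. Dset k s 2) = sig S"
proof -
  have disj: "\<forall>s\<in>S. \<forall>s'\<in>S. s \<noteq> s' \<longrightarrow> Dset k s 2 \<inter> Dset k s' 2 = {}"
  proof (cases "sig S = k")
    case True
    show ?thesis
    proof (intro ballI impI)
      fix s s' assume s: "s \<in> S" "s' \<in> S" "s \<noteq> s'"
      show "Dset k s 2 \<inter> Dset k s' 2 = {}"
      proof (rule ccontr)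
        assume "Dset k s 2 \<inter> Dset k s' 2 \<noteq> {}"
        then obtain d where d: "d \<in> Dset k s 2" "d \<in> Dset k s' 2" by auto
        have "supp s \<inter> supp s' = {}" using disj_case[OF True] s by auto
        moreover have "supp d \<subseteq> supp s" "supp d \<subseteq> supp s'" "supp d \<noteq> {}"
          using Dset_supp[OF d(1)] Dset_supp[OF d(2)] by auto
        ultimately show False by auto
      qed
    qed
  next
    case False
    then have sk: "sig S = k + 1" using sig_ge sig_le by simp
    show ?thesis
    proof (intro ballI impI)
      fix s s' assume s: "s \<in> S" "s' \<in> S" "s \<noteq> s'"
      show "Dset k s 2 \<inter> Dset k s' 2 = {}"
      proof (rule ccontr)
        assume "Dset k s 2 \<inter> Dset k s' 2 \<noteq> {}"
        then obtain d where d: "d \<in> Dset k s 2" "d \<in> Dset k s' 2" by auto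
        have c3: "card (supp s) = deg s" using sq_case(1)[OF sk] gS(2) s by simp
        have le: "le_pt d s" "deg d = 2" using d by (auto simp: Dset_def)
        have "\<And>i. i < length d \<Longrightarrow> d!i \<le> 1"
        proof -
          fix i assume i: "i < length d"
          then have "d!i \<le> s!i" "i < length s" using le by (auto simp: le_pt_nth)
          then show "d!i \<le> 1" using card_supp_eq_deg[OF c3] by fastforce
        qed
        then have "card (supp d) = 2" using deg_01[of d] le by simp
        moreover have "supp d \<subseteq> supp s \<inter> supp s'"
          using Dset_supp[OF d(1)] Dset_supp[OF d(2)] by auto
        ultimately have "2 \<le> card (supp s \<inter> supp s')"
          using card_mono[of "supp s \<inter> supp s'" "supp d"] by simp
        moreover have "card (supp s \<inter> supp s') \<le> 1" using sq_case(2)[OF sk] s by auto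
        ultimately show False by simp
      qed
    qed
  qed
  have "card (\<Union>s\<in>S. Dset k s 2) = (\<Sum>s\<in>S. card (Dset k s 2))"
    by (rule card_UN_disjoint) (use fS disj finite_Dset in auto)
  also have "... = sig S" unfolding sig_def using cardD by simp
  finally show ?thesis .
qed

lemma sig_cases: "sig S = k \<or> sig S = k + 1"
  using sig_ge sig_le by linarith

end

definition T3 :: "nat set \<Rightarrow> nat set set set" where
  "T3 W = {Q. \<Union>Q = W \<and> (\<forall>B\<in>Q. card B = 3) \<and> (\<forall>B\<in>Q. \<forall>B'\<in>Q. B \<noteq> B' \<longrightarrow> B \<inter> B' = {})}"

fun tp :: "nat \<Rightarrow> nat" where
  "tp 0 = 1" | "tp (Suc 0) = 0" | "tp (Suc (Suc 0)) = 0"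
| "tp (Suc (Suc (Suc m))) = (Suc (Suc m) choose 2) * tp m"

lemma tp_rec: "N \<ge> 1 \<Longrightarrow> tp N = ((N - 1) choose 2) * tp (N - 3)"
  by (cases N rule: tp.cases) auto

lemma finite_T3: "finite W \<Longrightarrow> finite (T3 W)"
proof -
  assume "finite W"
  have "T3 W \<subseteq> Pow (Pow W)" by (auto simp: T3_def)
  then show ?thesis using \<open>finite W\<close> finite_subset by blast
qed

lemma T3_empty: "T3 {} = {{}}"
  by (auto simp: T3_def) (metis card.empty zero_neq_numeral)

lemma T3_step:
  assumes W: "finite W" "a \<in> W"
  shows "bij_betw (\<lambda>(P, Q'). insert (insert a P) Q')
           (SIGMA P:{P. P \<subseteq> W - {a} \<and> card P = 2}. T3 (W - insert a P)) (T3 W)"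
proof (rule bij_betw_imageI)
  show "inj_on (\<lambda>(P, Q'). insert (insert a P) Q')
           (SIGMA P:{P. P \<subseteq> W - {a} \<and> card P = 2}. T3 (W - insert a P))"
  proof (rule inj_onI, clarify)
    fix P Q P2 Q2
    assume h: "P \<subseteq> W - {a}" "card P = 2" "Q \<in> T3 (W - insert a P)"
      "P2 \<subseteq> W - {a}" "card P2 = 2" "Q2 \<in> T3 (W - insert a P2)"
      "insert (insert a P) Q = insert (insert a P2) Q2"
    have aQ: "\<forall>B\<in>Q. a \<notin> B" "\<forall>B\<in>Q2. a \<notin> B" using h by (auto simp: T3_def)
    have "insert a P \<in> insert (insert a P2) Q2" using h(7) by blast
    then have "insert a P = insert a P2" using aQ by blast
    then have "P = P2" using h(1,4) by blast
    moreover have "Q = Q2"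
    proof -
      have "insert a P \<notin> Q" "insert a P \<notin> Q2" using aQ by auto
      then show ?thesis using h(7) \<open>insert a P = insert a P2\<close>
        by (metis insert_ident)
    qed
    ultimately show "P = P2 \<and> Q = Q2" by simp
  qed
next
  show "(\<lambda>(P, Q'). insert (insert a P) Q') `
           (SIGMA P:{P. P \<subseteq> W - {a} \<and> card P = 2}. T3 (W - insert a P)) = T3 W"
  proof
    show "(\<lambda>(P, Q'). insert (insert a P) Q') `
           (SIGMA P:{P. P \<subseteq> W - {a} \<and> card P = 2}. T3 (W - insert a P)) \<subseteq> T3 W"
    proof clarify
      fix P Q assume h: "P \<subseteq> W - {a}" "card P = 2" "Q \<in> T3 (W - insert a P)"
      have fP: "finite P" using h(2) card.infinite by fastforce
      have aP: "a \<notin> P" using h(1) by auto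
      have c: "card (insert a P) = 3" using h(2) fP aP by simp
      show "insert (insert a P) Q \<in> T3 W"
        using h c W unfolding T3_def by auto
    qed
  next
    show "T3 W \<subseteq> (\<lambda>(P, Q'). insert (insert a P) Q') `
           (SIGMA P:{P. P \<subseteq> W - {a} \<and> card P = 2}. T3 (W - insert a P))"
    proof
      fix Q assume Q: "Q \<in> T3 W"
      then obtain B where B: "B \<in> Q" "a \<in> B" using W by (auto simp: T3_def)
      have BW: "B \<subseteq> W" using Q B by (auto simp: T3_def)
      have cB: "card B = 3" using Q B by (auto simp: T3_def)
      have fB: "finite B" using cB card.infinite by fastforce
      define P where "P = B - {a}"
      have P: "P \<subseteq> W - {a}" "card P = 2" using BW cB B fB by (auto simp: P_def)
      have iP: "insert a P = B" using B by (auto simp: P_def)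
      have "Q - {B} \<in> T3 (W - insert a P)"
        unfolding iP using Q B unfolding T3_def by blast
      moreover have "Q = insert (insert a P) (Q - {B})" using iP B by auto
      ultimately show "Q \<in> (\<lambda>(P, Q'). insert (insert a P) Q') `
           (SIGMA P:{P. P \<subseteq> W - {a} \<and> card P = 2}. T3 (W - insert a P))"
        using P by (intro image_eqI[of _ _ "(P, Q - {B})"]) auto
    qed
  qed
qed

lemma card_T3: "finite W \<Longrightarrow> card (T3 W) = tp (card W)"
proof (induction "card W" arbitrary: W rule: less_induct)
  case less
  show ?case
  proof (cases "W = {}")
    case True
    then show ?thesis by (simp add: T3_empty)
  next
    case False
    then obtain a where a: "a \<in> W" by auto
    define Ps where "Ps = {P. P \<subseteq> W - {a} \<and> card P = 2}"
    have fPs: "finite Ps" unfolding Ps_def using less.prems by simp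
    have "card (T3 W) = card (SIGMA P:Ps. T3 (W - insert a P))"
      using bij_betw_same_card[OF T3_step[OF less.prems a]] by (simp add: Ps_def)
    also have "... = (\<Sum>P\<in>Ps. card (T3 (W - insert a P)))"
      by (rule card_SigmaI) (use fPs less.prems finite_T3 in auto)
    also have "... = (\<Sum>P\<in>Ps. tp (card W - 3))"
    proof (rule sum.cong)
      fix P assume P: "P \<in> Ps"
      then have fP: "finite P" "a \<notin> P" "insert a P \<subseteq> W" "card P = 2"
        using a by (auto simp: Ps_def card.infinite intro: ccontr)
      then have cc: "card (W - insert a P) = card W - 3"
        using less.prems by (simp add: card_Diff_subset)
      have "card (W - insert a P) < card W"
        using less.prems a by (intro psubset_card_mono) auto
      then show "card (T3 (W - insert a P)) = tp (card W - 3)"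
        using less.hyps[of "W - insert a P"] less.prems cc by simp
    qed simp
    also have "... = card Ps * tp (card W - 3)" by simp
    also have "card Ps = (card W - 1) choose 2"
      unfolding Ps_def using n_subsets[of "W - {a}" 2] less.prems a by simp
    finally show ?thesis using tp_rec[of "card W"] less.prems False
      by (simp add: Suc_le_eq card_gt_0_iff)
  qed
qed

lemma tp_closed: "tp (3*m) * 6^m * fact m = fact (3*m)"
proof (induction m)
  case 0
  then show ?case by simp
next
  case (Suc m)
  have e: "3 * Suc m = Suc (Suc (Suc (3*m)))" by simp
  have c2: "2 * (Suc (Suc (3*m)) choose 2) = (3*m+2)*(3*m+1)"
    by (simp add: choose_two)
  have "tp (3 * Suc m) * 6 ^ Suc m * fact (Suc m)
        = (2 * (Suc (Suc (3*m)) choose 2)) * (3 * (m+1)) * (tp (3*m) * 6^m * fact m)"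
    unfolding e by (simp add: algebra_simps)
  also have "... = (3*m+3) * (3*m+2) * (3*m+1) * fact (3*m)" using Suc c2 by (simp add: algebra_simps)
  also have "... = fact (3 * Suc m)" unfolding e by (simp add: algebra_simps)
  finally show ?case .
qed

lemma map_hilb4: "map (hilb P) [0..<4] = [hilb P 0, hilb P 1, hilb P 2, hilb P 3]"
  by (simp add: upt_rec numeral_2_eq_2 numeral_3_eq_3)

lemma card_units: "card ((\<lambda>i. ind k {i}) ` {..<k}) = k"
proof -
  have "inj_on (\<lambda>i. ind k {i}) {..<k}"
    by (rule inj_onI) (use ind_inj in blast)
  then show ?thesis by (simp add: card_image)
qed

context
  fixes k n :: nat
  assumes n1: "n \<ge> 1" and kn: "k = 3*n - 1"
begin

lemma down_hilb:
  assumes g: "good k n S"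
  shows "hilb (down k S) 0 = 1" "hilb (down k S) 1 = k" "hilb (down k S) 2 = sig S"
    "hilb (down k S) 3 = n" "plength (down k S) = 3"
    "card (down k S) = 1 + k + sig S + n" "is_partition k (down k S)" "socle (down k S) = S"
proof -
  have S: "S \<subseteq> pts k" "\<forall>s\<in>S. deg s = 3" "finite S" "card S = n" "\<forall>i<k. \<exists>s\<in>S. i \<in> supp s"
    using g fS[OF g n1 kn] by (auto simp: good_def)
  have ne: "S \<noteq> {}" using S n1 by auto
  show h0: "hilb (down k S) 0 = 1" using down_deg0[OF S(1-3) ne] by (simp add: hilb_def)
  show h1: "hilb (down k S) 1 = k" using down_deg1[OF S(1-3) S(5)] card_units by (simp add: hilb_def)
  show h2: "hilb (down k S) 2 = sig S"
    using down_deg2[OF S(1-3)] h2_eq[OF g n1 kn] by (simp add: hilb_def)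
  show h3: "hilb (down k S) 3 = n" using down_deg3[OF S(1-3)] S by (simp add: hilb_def)
  show "plength (down k S) = 3" using plength_down[OF S(1-3) ne] .
  show "card (down k S) = 1 + k + sig S + n"
    using card_down[OF S(1-3)] h0 h1 h2 h3 by (simp add: hilb_def numeral_3_eq_3 numeral_2_eq_2 atMost_Suc)
  show "is_partition k (down k S)" using partition_down[OF S(1-3)] .
  show "socle (down k S) = S" using socle_down[OF S(1-3)] .
qed

lemma part1:
  assumes P: "is_partition k P" "hilb P 1 = k" "socle_type_0003 P n"
  shows "plength P = 3 \<and> (map (hilb P) [0..<4] = [1, k, k, n] \<or> map (hilb P) [0..<4] = [1, k, k + 1, n])"
proof -
  obtain S where g: "good k n S" and e: "P = down k S" using G_good[OF P] by blast
  show ?thesis using down_hilb[OF g] sig_cases[OF g n1 kn] unfolding e map_hilb4 by auto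
qed

lemma Mpart_eq:
  "{P. M_partition k q n P \<and> plength P = 3} = down k ` {S. good k n S \<and> sig S = q}"
proof
  show "down k ` {S. good k n S \<and> sig S = q} \<subseteq> {P. M_partition k q n P \<and> plength P = 3}"
  proof clarify
    fix S assume g: "good k n S" and q: "q = sig S"
    have S: "S \<subseteq> pts k" "\<forall>s\<in>S. deg s = 3" "finite S"
      using g fS[OF g n1 kn] by (auto simp: good_def)
    have d3: "{x \<in> down k S. 3 \<le> deg x} = S"
      using down_deg3[OF S] down_deg[OF S] by force
    have "card S = n" using g by (simp add: good_def)
    then show "M_partition k (sig S) n (down k S) \<and> plength (down k S) = 3"
      using down_hilb[OF g] d3 unfolding M_partition_def by (auto simp: hilb_def)
  qed
next
  show "{P. M_partition k q n P \<and> plength P = 3} \<subseteq> down k ` {S. good k n S \<and> sig S = q}"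
  proof clarify
    fix P assume M: "M_partition k q n P" and pl: "plength P = 3"
    have P: "is_partition k P" "hilb P 1 = k" "hilb P 2 = q"
      "socle P \<subseteq> {x\<in>P. deg x \<ge> 3}" "card {x\<in>P. deg x \<ge> 3} = n"
      using M by (auto simp: M_partition_def)
    have fP: "finite P" using P by (simp add: is_partition_def)
    have le3: "\<And>x. x \<in> P \<Longrightarrow> deg x \<le> 3"
      using pl fP unfolding plength_def by (metis Max_ge finite_imageI imageI)
    have "{x\<in>P. deg x \<ge> 3} = socle P"
    proof
      show "socle P \<subseteq> {x\<in>P. deg x \<ge> 3}" using P(4) .
      show "{x\<in>P. deg x \<ge> 3} \<subseteq> socle P"
      proof
        fix x assume x: "x \<in> {x\<in>P. deg x \<ge> 3}"
        have "z = x" if "z \<in> P" "le_pt x z" for z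
          using le_pt_deg_eq[OF that(2)] le_pt_deg[OF that(2)] le3[OF that(1)] x by auto
        then show "x \<in> socle P" using x by (auto simp: socle_def)
      qed
    qed
    then have st: "socle_type_0003 P n" using P le3 unfolding socle_type_0003_def
      by (metis (no_types, lifting) le_antisym mem_Collect_eq)
    obtain g: "good k n (socle P)" and e: "P = down k (socle P)" using G_good[OF P(1,2) st] by blast
    have "sig (socle P) = q" using down_hilb(3)[OF g] e P(3) by simp
    then show "P \<in> down k ` {S. good k n S \<and> sig S = q}" using g e by blast
  qed
qed

lemma alpha_eq: "alpha k q n 3 = card {S. good k n S \<and> sig S = q}"
proof -
  have "inj_on (down k) {S. good k n S \<and> sig S = q}"
    by (rule inj_onI) (metis (no_types, lifting) down_hilb(8) mem_Collect_eq)
  then show ?thesis unfolding alpha_def Mpart_eq by (simp add: card_image)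
qed

end

definition sp :: "nat \<Rightarrow> nat \<Rightarrow> nat \<Rightarrow> nat list" where
  "sp k a b = map (\<lambda>i. if i = a then 2 else if i = b then 1 else 0) [0..<k]"

lemma sp_length[simp]: "length (sp k a b) = k" by (simp add: sp_def)
lemma sp_nth: "i < k \<Longrightarrow> sp k a b ! i = (if i = a then 2 else if i = b then 1 else 0)"
  by (simp add: sp_def)

lemma supp_sp: "a < k \<Longrightarrow> b < k \<Longrightarrow> supp (sp k a b) = {a, b}"
  by (auto simp: supp_def sp_nth split: if_splits)

lemma deg_sp: "a < k \<Longrightarrow> b < k \<Longrightarrow> a \<noteq> b \<Longrightarrow> deg (sp k a b) = 3"
  by (simp add: deg_supp supp_sp sp_nth)

lemma sp_inj: "a < k \<Longrightarrow> b < k \<Longrightarrow> a \<noteq> b \<Longrightarrow> a' < k \<Longrightarrow> b' < k \<Longrightarrow> a' \<noteq> b' \<Longrightarrow>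
  sp k a b = sp k a' b' \<Longrightarrow> a = a' \<and> b = b'"
proof -
  assume h: "a < k" "b < k" "a \<noteq> b" "a' < k" "b' < k" "a' \<noteq> b'" "sp k a b = sp k a' b'"
  have "sp k a b ! a = sp k a' b' ! a" using h by simp
  then have aa: "a = a'" using h(1-6) by (auto simp: sp_nth split: if_splits)
  have "sp k a b ! b = sp k a' b' ! b" using h by simp
  then show ?thesis using h(1-6) aa by (auto simp: sp_nth split: if_splits)
qed

lemma two_supp_sp:
  assumes l: "length s = k" and d: "deg s = 3" and c: "card (supp s) = 2"
  shows "\<exists>a b. a < k \<and> b < k \<and> a \<noteq> b \<and> s = sp k a b"
proof -
  obtain a b where ab: "supp s = {a, b}" "a \<noteq> b" using c card_2_iff[of "supp s"] by blast
  have "a \<in> supp s" "b \<in> supp s" using ab by auto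
  then have abk: "a < k" "b < k" "0 < s!a" "0 < s!b" using l by (auto simp: supp_def)
  have sum: "s!a + s!b = 3" using d ab by (simp add: deg_supp)
  have z: "\<And>i. i < k \<Longrightarrow> i \<noteq> a \<Longrightarrow> i \<noteq> b \<Longrightarrow> s!i = 0"
  proof -
    fix i assume "i < k" "i \<noteq> a" "i \<noteq> b"
    then have "i \<notin> supp s" using ab by auto
    then show "s!i = 0" using \<open>i < k\<close> l by (simp add: supp_def)
  qed
  show ?thesis
  proof (cases "s!a = 2")
    case True
    then have sb: "s!b = 1" using sum by simp
    have "s = sp k a b"
    proof (rule nth_equalityI)
      show "length s = length (sp k a b)" using l by simp
      fix i assume "i < length s"
      then show "s ! i = sp k a b ! i" using True sb z l ab(2) by (simp add: sp_nth)
    qed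
    then show ?thesis using abk ab by blast
  next
    case False
    then have sa: "s!a = 1" and sb: "s!b = 2" using sum abk by auto
    have "s = sp k b a"
    proof (rule nth_equalityI)
      show "length s = length (sp k b a)" using l by simp
      fix i assume "i < length s"
      then show "s ! i = sp k b a ! i" using sa sb z l ab(2) by (simp add: sp_nth)
    qed
    then show ?thesis using abk ab by blast
  qed
qed

lemma T3_props:
  assumes "Q \<in> T3 W"
  shows "\<Union>Q = W" "\<And>B. B \<in> Q \<Longrightarrow> card B = 3" "\<And>B. B \<in> Q \<Longrightarrow> finite B"
    "\<And>B B'. B \<in> Q \<Longrightarrow> B' \<in> Q \<Longrightarrow> B \<noteq> B' \<Longrightarrow> B \<inter> B' = {}"
  using assms by (auto simp: T3_def intro: card_ge_0_finite)

lemma T3_card: "Q \<in> T3 W \<Longrightarrow> finite W \<Longrightarrow> card W = 3 * card Q"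
proof -
  assume Q: "Q \<in> T3 W" and W: "finite W"
  have fQ: "finite Q" using Q W finite_T3 T3_props(1)[OF Q] by (metis finite_UnionD)
  have "card (\<Union>Q) = sum card Q"
    by (rule card_Union_disjoint) (use T3_props[OF Q] in \<open>auto simp: pairwise_def disjnt_def\<close>)
  also have "... = sum (\<lambda>_. 3) Q" using T3_props(2)[OF Q] by simp
  finally show ?thesis using T3_props(1)[OF Q] by simp
qed

lemma ind_image_props:
  assumes Q: "Q \<in> T3 W" and W: "W \<subseteq> {..<k}"
  shows "inj_on (ind k) Q" "\<And>B. B \<in> Q \<Longrightarrow> deg (ind k B) = 3"
    "\<And>B. B \<in> Q \<Longrightarrow> supp (ind k B) = B" "\<And>B. B \<in> Q \<Longrightarrow> ind k B \<in> pts k"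
proof -
  have sub: "\<And>B. B \<in> Q \<Longrightarrow> B \<subseteq> {..<k}" using T3_props(1)[OF Q] W by auto
  show "inj_on (ind k) Q" by (rule inj_onI) (use ind_inj sub in blast)
  show "\<And>B. B \<in> Q \<Longrightarrow> deg (ind k B) = 3" using deg_ind sub T3_props(2)[OF Q] by simp
  show "\<And>B. B \<in> Q \<Longrightarrow> supp (ind k B) = B" using sub by (auto simp: Int_absorb2)
  show "\<And>B. B \<in> Q \<Longrightarrow> ind k B \<in> pts k" by (simp add: pts_def)
qed

lemma sqfree_ind: "length s = k \<Longrightarrow> card (supp s) = deg s \<Longrightarrow> ind k (supp s) = s"
  using ind_supp card_supp_eq_deg by metis

context
  fixes k n :: nat
  assumes n1: "n \<ge> 1" and kn: "k = 3*n - 1"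
begin

definition DA where
  "DA = (SIGMA a:{..<k}. SIGMA b:{..<k}-{a}. T3 ({..<k} - {a, b}))"

definition FA where
  "FA = (\<lambda>(a, b, Q). insert (sp k a b) (ind k ` Q))"

lemma card_DA: "card DA = k * (k - 1) * tp (k - 2)"
proof -
  have "card DA = (\<Sum>a<k. card (SIGMA b:{..<k}-{a}. T3 ({..<k} - {a, b})))"
    unfolding DA_def by (rule card_SigmaI) (auto intro!: finite_SigmaI finite_T3)
  also have "... = (\<Sum>a<k. (k - 1) * tp (k - 2))"
  proof (rule sum.cong)
    fix a assume a: "a \<in> {..<k}"
    have "card (SIGMA b:{..<k}-{a}. T3 ({..<k} - {a, b})) = (\<Sum>b\<in>{..<k}-{a}. card (T3 ({..<k} - {a, b})))"
      by (rule card_SigmaI) (auto intro!: finite_T3)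
    also have "... = (\<Sum>b\<in>{..<k}-{a}. tp (k - 2))"
    proof (rule sum.cong)
      fix b assume b: "b \<in> {..<k}-{a}"
      have "card ({..<k} - {a, b}) = k - 2" using a b by (simp add: card_Diff_subset)
      then show "card (T3 ({..<k} - {a, b})) = tp (k - 2)" by (simp add: card_T3)
    qed simp
    also have "... = (k - 1) * tp (k - 2)" using a by simp
    finally show "card (SIGMA b:{..<k}-{a}. T3 ({..<k} - {a, b})) = (k - 1) * tp (k - 2)" .
  qed simp
  finally show ?thesis by simp
qed

lemma FA_good:
  assumes "x \<in> DA"
  shows "good k n (FA x) \<and> sig (FA x) = k"
proof -
  obtain a b Q where x: "x = (a, b, Q)" and ab: "a < k" "b < k" "a \<noteq> b" and Q: "Q \<in> T3 ({..<k} - {a, b})"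
    using assms unfolding DA_def by auto
  have W: "{..<k} - {a, b} \<subseteq> {..<k}" by auto
  note ip = ind_image_props[OF Q W]
  have cW: "card ({..<k} - {a, b}) = k - 2" using ab by (simp add: card_Diff_subset)
  have cQ: "card Q = n - 1" using T3_card[OF Q] cW kn n1 by simp
  have fQ: "finite Q" using cQ n1 card.infinite kn
    by (metis T3_props(1)[OF Q] finite_Diff finite_UnionD finite_lessThan)
  have nin: "sp k a b \<notin> ind k ` Q"
  proof
    assume "sp k a b \<in> ind k ` Q"
    then obtain B where "B \<in> Q" "sp k a b = ind k B" by auto
    then have "card (supp (sp k a b)) = 3" using ip(3) T3_props(2)[OF Q] by simp
    then show False using supp_sp[OF ab(1,2)] ab by simp
  qed
  have cS: "card (FA x) = n"
    using nin fQ card_image[OF ip(1)] cQ n1 by (simp add: x FA_def)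
  have pts: "FA x \<subseteq> pts k" using ip(4) by (auto simp: x FA_def pts_def)
  have d3: "\<forall>s\<in>FA x. deg s = 3" using ip(2) deg_sp[OF ab] by (auto simp: x FA_def)
  have cov: "\<forall>i<k. \<exists>s\<in>FA x. i \<in> supp s"
  proof (intro allI impI)
    fix i assume i: "i < k"
    show "\<exists>s\<in>FA x. i \<in> supp s"
    proof (cases "i \<in> {a, b}")
      case True
      then show ?thesis using supp_sp[OF ab(1,2)] by (auto simp: x FA_def)
    next
      case False
      then have "i \<in> \<Union>Q" using T3_props(1)[OF Q] i by auto
      then obtain B where "B \<in> Q" "i \<in> B" by auto
      then show ?thesis using ip(3) by (auto simp: x FA_def)
    qed
  qed
  have "sig (FA x) = card (supp (sp k a b)) + (\<Sum>s\<in>ind k ` Q. card (supp s))"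
    using nin fQ by (simp add: x FA_def sig_def)
  also have "(\<Sum>s\<in>ind k ` Q. card (supp s)) = (\<Sum>B\<in>Q. card (supp (ind k B)))"
    by (simp add: sum.reindex[OF ip(1)])
  also have "... = (\<Sum>B\<in>Q. 3)" using ip(3) T3_props(2)[OF Q] by simp
  finally have "sig (FA x) = k" using supp_sp[OF ab(1,2)] ab cQ kn n1 by simp
  then show ?thesis using cS pts d3 cov by (simp add: good_def)
qed

lemma FA_inj: "inj_on FA DA"
proof (rule inj_onI)
  fix x y assume x: "x \<in> DA" and y: "y \<in> DA" and e: "FA x = FA y"
  obtain a b Q where xx: "x = (a, b, Q)" and ab: "a < k" "b < k" "a \<noteq> b" and Q: "Q \<in> T3 ({..<k} - {a, b})"
    using x unfolding DA_def by auto
  obtain a' b' Q' where yy: "y = (a', b', Q')" and ab': "a' < k" "b' < k" "a' \<noteq> b'" and Q': "Q' \<in> T3 ({..<k} - {a', b'})"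
    using y unfolding DA_def by auto
  have W: "{..<k} - {a, b} \<subseteq> {..<k}" "{..<k} - {a', b'} \<subseteq> {..<k}" by auto
  have nin: "sp k a b \<notin> ind k ` Q'" "sp k a' b' \<notin> ind k ` Q" "sp k a b \<notin> ind k ` Q" "sp k a' b' \<notin> ind k ` Q'"
    using ind_image_props(3)[OF Q W(1)] ind_image_props(3)[OF Q' W(2)] T3_props(2)[OF Q] T3_props(2)[OF Q']
      supp_sp[OF ab(1,2)] supp_sp[OF ab'(1,2)] ab ab'
    by (auto simp: card_insert_if) (metis card_2_iff numeral_eq_iff semiring_norm(89))+
  have fx: "FA x = insert (sp k a b) (ind k ` Q)" by (simp add: xx FA_def)
  have fy: "FA y = insert (sp k a' b') (ind k ` Q')" by (simp add: yy FA_def)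
  have "sp k a b \<in> insert (sp k a' b') (ind k ` Q')" using e fx fy by auto
  then have "sp k a b = sp k a' b'" using nin by simp
  then have aa: "a = a'" "b = b'" using sp_inj ab ab' by blast+
  have "ind k ` Q = ind k ` Q'" using e fx fy nin aa by (metis insert_ident)
  moreover have "inj_on (ind k) (Pow {..<k})" by (rule inj_onI) (use ind_inj in blast)
  moreover have "Q \<subseteq> Pow {..<k}" "Q' \<subseteq> Pow {..<k}" using T3_props(1)[OF Q] T3_props(1)[OF Q'] by auto
  ultimately have "Q = Q'" using inj_on_image_eq_iff by metis
  then show "x = y" using xx yy aa by simp
qed

lemma FA_surj:
  assumes g: "good k n S" and sk: "sig S = k"
  shows "S \<in> FA ` DA"
proof -
  note gS = gS[OF g n1 kn]
  have fS: "finite S" using fS[OF g n1 kn] .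
  have disj: "\<forall>s\<in>S. \<forall>s'\<in>S. s \<noteq> s' \<longrightarrow> supp s \<inter> supp s' = {}" using disj_case[OF g n1 kn sk] .
  have le3: "\<And>s. s \<in> S \<Longrightarrow> card (supp s) \<le> 3" using supp_le3[OF g n1 kn] .
  obtain m where m: "n = Suc m" using n1 by (cases n) auto
  have "\<exists>s0\<in>S. card (supp s0) < 3"
  proof (rule ccontr)
    assume "\<not> (\<exists>s0\<in>S. card (supp s0) < 3)"
    then have "\<And>s. s \<in> S \<Longrightarrow> card (supp s) = 3" using le3 by (simp add: not_less le_antisym)
    then have "sig S = 3 * n" using gS(3) by (simp add: sig_def)
    then show False using sk kn m by simp
  qed
  then obtain s0 where s0: "s0 \<in> S" "card (supp s0) < 3" by blast
  have cS0: "card (S - {s0}) = m" using s0 fS gS(3) m by simp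
  have split: "sig S = card (supp s0) + (\<Sum>s\<in>S-{s0}. card (supp s))"
    using s0 fS by (simp add: sig_def sum.remove)
  have R0: "(\<Sum>s\<in>S-{s0}. card (supp s)) \<le> (\<Sum>s\<in>S-{s0}. 3)" by (rule sum_mono) (simp add: le3)
  have c3: "(\<Sum>s\<in>S-{s0}. (3::nat)) = 3 * m" unfolding sum_constant cS0 by simp
  have R: "(\<Sum>s\<in>S-{s0}. card (supp s)) \<le> 3 * m" using R0 unfolding c3 .
  have k3: "k = 3 * m + 2" using kn m by simp
  have c2: "card (supp s0) = 2" using split sk k3 R s0(2) by linarith
  have rest: "(\<Sum>s\<in>S-{s0}. card (supp s)) = 3 * card (S - {s0})"
    using split sk k3 c2 cS0 by linarith
  have others: "\<And>s. s \<in> S - {s0} \<Longrightarrow> card (supp s) = 3"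
  proof -
    fix s assume "s \<in> S - {s0}"
    then show "card (supp s) = 3"
      using all_eq_max[of "S - {s0}" "\<lambda>s. card (supp s)" 3] rest fS le3 by blast
  qed
  obtain a b where ab: "a < k" "b < k" "a \<noteq> b" "s0 = sp k a b"
    using two_supp_sp[OF lenS[OF g n1 kn s0(1)] gS(2)[OF s0(1)] c2] by blast
  have sab: "supp s0 = {a, b}" using supp_sp[OF ab(1,2)] ab(4) by simp
  define Q where "Q = supp ` (S - {s0})"
  have U: "\<Union>Q = {..<k} - {a, b}"
  proof
    show "\<Union>Q \<subseteq> {..<k} - {a, b}"
    proof
      fix i assume "i \<in> \<Union>Q"
      then obtain s where s: "s \<in> S" "s \<noteq> s0" "i \<in> supp s" unfolding Q_def by auto
      have "supp s \<inter> supp s0 = {}" using disj s s0(1) by blast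
      moreover have "i < k" using s supp_sub[of s] lenS[OF g n1 kn s(1)] by auto
      ultimately show "i \<in> {..<k} - {a, b}" using s(3) sab by auto
    qed
    show "{..<k} - {a, b} \<subseteq> \<Union>Q"
    proof
      fix i assume i: "i \<in> {..<k} - {a, b}"
      then obtain s where s: "s \<in> S" "i \<in> supp s" using Usupp[OF g n1 kn] by auto
      then have "s \<noteq> s0" using i sab by auto
      then show "i \<in> \<Union>Q" using s unfolding Q_def by auto
    qed
  qed
  have Qc: "Q \<in> T3 ({..<k} - {a, b})"
    unfolding T3_def
  proof (intro CollectI conjI ballI impI)
    show "\<Union>Q = {..<k} - {a, b}" using U .
    fix B assume "B \<in> Q"
    then show "card B = 3" using others by (auto simp: Q_def)
  next
    fix B B' assume BB: "B \<in> Q" "B' \<in> Q" "B \<noteq> B'"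
    then obtain s s' where "s \<in> S" "s' \<in> S" "B = supp s" "B' = supp s'" unfolding Q_def by auto
    moreover then have "s \<noteq> s'" using BB by auto
    ultimately show "B \<inter> B' = {}" using disj by blast
  qed
  have "\<And>s. s \<in> S - {s0} \<Longrightarrow> ind k (supp s) = s"
  proof -
    fix s assume s: "s \<in> S - {s0}"
    then have c: "card (supp s) = deg s" using others gS(2) by simp
    have l: "length s = k" using lenS[OF g n1 kn] s by simp
    show "ind k (supp s) = s" by (rule sqfree_ind[OF l c])
  qed
  then have "ind k ` Q = S - {s0}" unfolding Q_def image_image by simp
  then have "S = insert (sp k a b) (ind k ` Q)" using s0 ab(4) by auto
  then have "S = FA (a, b, Q)" by (simp add: FA_def)
  moreover have "(a, b, Q) \<in> DA" using ab Qc by (simp add: DA_def)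
  ultimately show ?thesis by blast
qed

lemma caseA_count: "card {S. good k n S \<and> sig S = k} = k * (k - 1) * tp (k - 2)"
proof -
  have "FA ` DA = {S. good k n S \<and> sig S = k}"
    using FA_good FA_surj by blast
  then show ?thesis using card_image[OF FA_inj] card_DA by simp
qed

end

definition Ps :: "nat set \<Rightarrow> nat set set" where
  "Ps M = {P. P \<subseteq> M \<and> card P = 2}"

definition LP :: "nat set \<Rightarrow> (nat set \<times> nat set) set" where
  "LP M = (SIGMA P1:Ps M. {P2. P2 \<subseteq> M - P1 \<and> card P2 = 2 \<and> Min P1 < Min P2})"

lemma card2_props: "card P = 2 \<Longrightarrow> finite P \<and> P \<noteq> {} \<and> Min P \<in> P"
proof -
  assume c: "card P = 2"
  then have "finite P" "P \<noteq> {}" using card.infinite by fastforce+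
  then show ?thesis by simp
qed

lemma pairs_half:
  assumes M: "finite M"
  shows "2 * card (LP M) = (card M choose 2) * ((card M - 2) choose 2)"
proof -
  define Ord where "Ord = (SIGMA P1:Ps M. Ps (M - P1))"
  have fO: "finite Ord" unfolding Ord_def Ps_def using M by (auto intro!: finite_SigmaI)
  have "card Ord = (\<Sum>P1\<in>Ps M. card (Ps (M - P1)))"
    unfolding Ord_def by (rule card_SigmaI) (use M in \<open>auto simp: Ps_def\<close>)
  also have "... = (\<Sum>P1\<in>Ps M. (card M - 2) choose 2)"
  proof (rule sum.cong)
    fix P1 assume P1: "P1 \<in> Ps M"
    then have "card (M - P1) = card M - 2" using M by (auto simp: Ps_def card_Diff_subset card2_props)
    then show "card (Ps (M - P1)) = (card M - 2) choose 2"
      unfolding Ps_def using n_subsets[of "M - P1" 2] M by simp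
  qed simp
  also have "... = card (Ps M) * ((card M - 2) choose 2)" by simp
  also have "card (Ps M) = card M choose 2" unfolding Ps_def using n_subsets[OF M] by simp
  finally have cO: "card Ord = (card M choose 2) * ((card M - 2) choose 2)" .
  define GP where "GP = {x\<in>Ord. Min (snd x) < Min (fst x)}"
  have LPe: "LP M = {x\<in>Ord. Min (fst x) < Min (snd x)}"
    unfolding LP_def Ord_def Ps_def by auto
  have un: "Ord = LP M \<union> GP"
  proof
    show "Ord \<subseteq> LP M \<union> GP"
    proof
      fix x assume x: "x \<in> Ord"
      obtain P1 P2 where xx: "x = (P1, P2)" by (cases x)
      have h: "card P1 = 2" "card P2 = 2" "P1 \<inter> P2 = {}" using x xx by (auto simp: Ord_def Ps_def)
      then have "Min P1 \<noteq> Min P2" using card2_props[OF h(1)] card2_props[OF h(2)] by auto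
      then show "x \<in> LP M \<union> GP" using x xx unfolding LPe GP_def by auto
    qed
  qed (auto simp: LPe GP_def)
  have dis: "LP M \<inter> GP = {}" unfolding LPe GP_def by auto
  have sw: "prod.swap ` LP M = GP"
  proof
    show "prod.swap ` LP M \<subseteq> GP" unfolding LPe GP_def Ord_def Ps_def by auto
    show "GP \<subseteq> prod.swap ` LP M"
    proof
      fix x assume x: "x \<in> GP"
      then have "prod.swap x \<in> LP M" unfolding LPe GP_def Ord_def Ps_def by (cases x) auto
      then show "x \<in> prod.swap ` LP M" by (metis image_eqI swap_swap)
    qed
  qed
  have "card GP = card (LP M)" using sw card_image[of prod.swap "LP M"] by simp
  moreover have "card Ord = card (LP M) + card GP"
    using un dis fO by (simp add: card_Un_disjoint)
  ultimately show ?thesis using cO by simp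
qed

definition Xf :: "nat \<Rightarrow> nat set \<Rightarrow> nat set \<Rightarrow> nat set set \<Rightarrow> nat set set" where
  "Xf v P1 P2 Q = insert (insert v P1) (insert (insert v P2) Q)"

context
  fixes k n :: nat
  assumes n1: "n \<ge> 1" and kn: "k = 3*n - 1"
begin

definition DB where
  "DB = (SIGMA v:{..<k}. SIGMA p:LP ({..<k} - {v}). T3 ({..<k} - insert v (fst p \<union> snd p)))"

definition FB where
  "FB = (\<lambda>(v, p, Q). ind k ` Xf v (fst p) (snd p) Q)"

lemma DB_props:
  assumes "(v, (P1, P2), Q) \<in> DB"
  shows "v < k" "P1 \<subseteq> {..<k} - {v}" "card P1 = 2" "P2 \<subseteq> {..<k} - {v} - P1" "card P2 = 2"
    "Min P1 < Min P2" "Q \<in> T3 ({..<k} - insert v (P1 \<union> P2))"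
  using assms by (auto simp: DB_def LP_def Ps_def)

lemma U5:
  assumes "v < k" "P1 \<subseteq> {..<k} - {v}" "card P1 = 2" "P2 \<subseteq> {..<k} - {v} - P1" "card P2 = 2"
  shows "insert v (P1 \<union> P2) \<subseteq> {..<k}" "card (insert v (P1 \<union> P2)) = 5"
    "card ({..<k} - insert v (P1 \<union> P2)) = k - 5"
proof -
  show s: "insert v (P1 \<union> P2) \<subseteq> {..<k}" using assms(1,2,4) by blast
  have f: "finite P1" "finite P2" using card2_props assms(3,5) by blast+
  have dj: "P1 \<inter> P2 = {}" using assms(4) by blast
  have "card (P1 \<union> P2) = card P1 + card P2" using card_Un_disjoint[OF f dj] .
  then have c4: "card (P1 \<union> P2) = 4" using assms(3,5) by simp
  have "v \<notin> P1 \<union> P2" using assms(2,4) by blast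
  then show c: "card (insert v (P1 \<union> P2)) = 5" using f c4 by simp
  have fi: "finite (insert v (P1 \<union> P2))" using f by simp
  show "card ({..<k} - insert v (P1 \<union> P2)) = k - 5" using card_Diff_subset[OF fi s] c by simp
qed

lemma card_DB: "2 * card DB = k * (((k - 1) choose 2) * ((k - 3) choose 2)) * tp (k - 5)"
proof -
  have "card DB = (\<Sum>v<k. card (SIGMA p:LP ({..<k} - {v}). T3 ({..<k} - insert v (fst p \<union> snd p))))"
    unfolding DB_def by (rule card_SigmaI) (auto intro!: finite_SigmaI finite_T3 simp: LP_def Ps_def)
  also have "... = (\<Sum>v<k. card (LP ({..<k} - {v})) * tp (k - 5))"
  proof (rule sum.cong)
    fix v assume v: "v \<in> {..<k}"
    have "card (SIGMA p:LP ({..<k} - {v}). T3 ({..<k} - insert v (fst p \<union> snd p)))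
        = (\<Sum>p\<in>LP ({..<k} - {v}). card (T3 ({..<k} - insert v (fst p \<union> snd p))))"
      by (rule card_SigmaI) (auto intro!: finite_SigmaI finite_T3 simp: LP_def Ps_def)
    also have "... = (\<Sum>p\<in>LP ({..<k} - {v}). tp (k - 5))"
    proof (rule sum.cong)
      fix p assume p: "p \<in> LP ({..<k} - {v})"
      obtain P1 P2 where pp: "p = (P1, P2)" by (cases p)
      have h: "P1 \<subseteq> {..<k} - {v}" "card P1 = 2" "P2 \<subseteq> {..<k} - {v} - P1" "card P2 = 2"
        using p pp by (auto simp: LP_def Ps_def)
      have "card ({..<k} - insert v (P1 \<union> P2)) = k - 5" using U5(3)[OF _ h] v by simp
      then show "card (T3 ({..<k} - insert v (fst p \<union> snd p))) = tp (k - 5)"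
        using pp by (simp add: card_T3)
    qed simp
    also have "... = card (LP ({..<k} - {v})) * tp (k - 5)" by simp
    finally show "card (SIGMA p:LP ({..<k} - {v}). T3 ({..<k} - insert v (fst p \<union> snd p)))
        = card (LP ({..<k} - {v})) * tp (k - 5)" .
  qed simp
  finally have "2 * card DB = (\<Sum>v<k. 2 * card (LP ({..<k} - {v})) * tp (k - 5))"
    by (simp add: sum_distrib_left mult.assoc)
  also have "... = (\<Sum>v<k. (((k - 1) choose 2) * ((k - 3) choose 2)) * tp (k - 5))"
  proof (rule sum.cong)
    fix v assume v: "v \<in> {..<k}"
    have "card ({..<k} - {v}) = k - 1" using v by simp
    then show "2 * card (LP ({..<k} - {v})) * tp (k - 5) = (((k - 1) choose 2) * ((k - 3) choose 2)) * tp (k - 5)"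
      using pairs_half[of "{..<k} - {v}"] by (simp add: numeral_3_eq_3)
  qed simp
  also have "... = k * (((k - 1) choose 2) * ((k - 3) choose 2)) * tp (k - 5)" by simp
  finally show ?thesis .
qed

lemma X_struct:
  assumes h: "v < k" "P1 \<subseteq> {..<k} - {v}" "card P1 = 2" "P2 \<subseteq> {..<k} - {v} - P1" "card P2 = 2"
    and Q: "Q \<in> T3 ({..<k} - insert v (P1 \<union> P2))"
  shows "Xf v P1 P2 Q \<subseteq> Pow {..<k}" "\<forall>B\<in>Xf v P1 P2 Q. card B = 3" "\<Union>(Xf v P1 P2 Q) = {..<k}"
    "\<forall>B\<in>Xf v P1 P2 Q. \<forall>B'\<in>Xf v P1 P2 Q. B \<noteq> B' \<longrightarrow> B \<inter> B' \<subseteq> {v}"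
    "{B\<in>Xf v P1 P2 Q. v \<in> B} = {insert v P1, insert v P2}"
    "insert v P1 \<noteq> insert v P2" "insert v P1 \<notin> Q" "insert v P2 \<notin> Q"
    "card (Xf v P1 P2 Q) = card Q + 2" "3 * card Q = k - 5"
proof -
  note T = T3_props[OF Q]
  have f: "finite P1" "finite P2" "P1 \<noteq> {}" "P2 \<noteq> {}" using h card2_props by auto
  have vQ: "\<And>B. B \<in> Q \<Longrightarrow> B \<inter> insert v (P1 \<union> P2) = {}" using T(1) by auto
  show "Xf v P1 P2 Q \<subseteq> Pow {..<k}" using h T(1) by (auto simp: Xf_def)
  have vn: "v \<notin> P1" "v \<notin> P2" using h(2,4) by blast+
  have c1: "card (insert v P1) = 3" "card (insert v P2) = 3" using f vn h(3,5) by simp_all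
  show "\<forall>B\<in>Xf v P1 P2 Q. card B = 3" using c1 T(2) by (auto simp: Xf_def)
  show "\<Union>(Xf v P1 P2 Q) = {..<k}" using T(1) h by (auto simp: Xf_def)
  show "\<forall>B\<in>Xf v P1 P2 Q. \<forall>B'\<in>Xf v P1 P2 Q. B \<noteq> B' \<longrightarrow> B \<inter> B' \<subseteq> {v}"
    unfolding Xf_def using T(4) vQ h by blast
  show n1': "insert v P1 \<notin> Q" "insert v P2 \<notin> Q" using vQ by blast+
  show "{B\<in>Xf v P1 P2 Q. v \<in> B} = {insert v P1, insert v P2}"
    unfolding Xf_def using vQ by blast
  show ne: "insert v P1 \<noteq> insert v P2"
  proof
    assume "insert v P1 = insert v P2"
    then have "P1 = P2" using h by blast
    then show False using h f by blast
  qed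
  have fQ: "finite Q" using T(1) by (metis finite_Diff finite_UnionD finite_lessThan)
  show "card (Xf v P1 P2 Q) = card Q + 2" using fQ n1' ne by (simp add: Xf_def)
  show "3 * card Q = k - 5" using T3_card[OF Q] U5(3)[OF h] by simp
qed

lemma FB_good:
  assumes "x \<in> DB"
  shows "good k n (FB x) \<and> sig (FB x) = k + 1"
proof -
  obtain v P1 P2 Q where x: "x = (v, (P1, P2), Q)" by (cases x) auto
  note d = DB_props[OF assms[unfolded x]]
  note X = X_struct[OF d(1-5) d(7)]
  define X0 where "X0 = Xf v P1 P2 Q"
  have inj: "inj_on (ind k) X0"
  proof (rule inj_onI)
    fix B B' assume BB: "B \<in> X0" "B' \<in> X0" "ind k B = ind k B'"
    then have "B \<subseteq> {..<k}" "B' \<subseteq> {..<k}" using X(1) unfolding X0_def by blast+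
    then show "B = B'" using ind_inj BB(3) by blast
  qed
  have fX: "finite X0" using X(1) unfolding X0_def by (metis finite_Pow_iff finite_lessThan rev_finite_subset)
  have FBx: "FB x = ind k ` X0" by (simp add: x FB_def X0_def)
  have sB: "\<And>B. B \<in> X0 \<Longrightarrow> supp (ind k B) = B" using X(1) by (auto simp: X0_def Int_absorb2)
  have k5: "5 \<le> k" using U5(2)[OF d(1-5)] U5(1)[OF d(1-5)]
    by (metis card_lessThan card_mono finite_lessThan)
  have cX: "card X0 = n" using X(9,10) kn k5 unfolding X0_def by linarith
  have cS: "card (FB x) = n" using card_image[OF inj] cX FBx by simp
  have pts: "FB x \<subseteq> pts k" using FBx by (auto simp: pts_def)
  have d3: "\<forall>s\<in>FB x. deg s = 3" using FBx X(1,2) deg_ind unfolding X0_def by auto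
  have cov: "\<forall>i<k. \<exists>s\<in>FB x. i \<in> supp s"
  proof (intro allI impI)
    fix i assume "i < k"
    then obtain B where "B \<in> X0" "i \<in> B" using X(3) unfolding X0_def by blast
    then show "\<exists>s\<in>FB x. i \<in> supp s" using sB FBx by auto
  qed
  have "sig (FB x) = (\<Sum>B\<in>X0. card (supp (ind k B)))"
    unfolding FBx sig_def by (simp add: sum.reindex[OF inj])
  also have "... = (\<Sum>B\<in>X0. 3)" using sB X(2) unfolding X0_def by simp
  also have "... = 3 * n" using cX by simp
  finally have "sig (FB x) = k + 1" using kn n1 by simp
  then show ?thesis using cS pts d3 cov by (simp add: good_def)
qed

lemma FB_inj: "inj_on FB DB"
proof (rule inj_onI)
  fix x y assume x: "x \<in> DB" and y: "y \<in> DB" and e: "FB x = FB y"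
  obtain v P1 P2 Q where xx: "x = (v, (P1, P2), Q)" by (cases x) auto
  obtain v' P1' P2' Q' where yy: "y = (v', (P1', P2'), Q')" by (cases y) auto
  note d = DB_props[OF x[unfolded xx]]
  note d' = DB_props[OF y[unfolded yy]]
  note X = X_struct[OF d(1-5) d(7)]
  note X' = X_struct[OF d'(1-5) d'(7)]
  have injP: "inj_on (ind k) (Pow {..<k})" by (rule inj_onI) (use ind_inj in blast)
  have "ind k ` Xf v P1 P2 Q = ind k ` Xf v' P1' P2' Q'" using e by (simp add: xx yy FB_def)
  then have XX: "Xf v P1 P2 Q = Xf v' P1' P2' Q'"
    using inj_on_image_eq_iff[OF injP X(1) X'(1)] by simp
  have m1: "insert v P1 \<in> Xf v' P1' P2' Q'" unfolding XX[symmetric] by (simp add: Xf_def)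
  have m2: "insert v P2 \<in> Xf v' P1' P2' Q'" unfolding XX[symmetric] by (simp add: Xf_def)
  have "insert v P1 \<inter> insert v P2 \<subseteq> {v'}" using X'(4)[rule_format, OF m1 m2 X(6)] .
  then have vv: "v = v'" by auto
  have "{insert v P1, insert v P2} = {insert v P1', insert v P2'}"
    using X(5) X'(5) XX vv by simp
  moreover have ni: "v \<notin> P1" "v \<notin> P2" "v \<notin> P1'" "v \<notin> P2'" using d d' vv by auto
  ultimately have pp: "P1 = P1' \<and> P2 = P2'"
  proof (cases "insert v P1 = insert v P1'")
    case True
    assume eq: "{insert v P1, insert v P2} = {insert v P1', insert v P2'}"
    then have "insert v P2 = insert v P2'" using True X(6) by (auto simp: doubleton_eq_iff)
    then show ?thesis using True ni by (simp add: insert_ident)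
  next
    case False
    assume eq: "{insert v P1, insert v P2} = {insert v P1', insert v P2'}"
    then have "insert v P1 = insert v P2'" "insert v P2 = insert v P1'" using False by (auto simp: doubleton_eq_iff)
    then have "P1 = P2'" "P2 = P1'" using ni by (simp_all add: insert_ident)
    then show ?thesis using d(6) d'(6) by simp
  qed
  have "Q = Xf v P1 P2 Q - {insert v P1, insert v P2}" using X(7,8) by (auto simp: Xf_def)
  also have "... = Xf v' P1' P2' Q' - {insert v' P1', insert v' P2'}" using XX vv pp by simp
  also have "... = Q'" using X'(7,8) by (auto simp: Xf_def)
  finally show "x = y" using xx yy vv pp by simp
qed

end

context
  fixes k n :: nat
  assumes n1: "n \<ge> 1" and kn: "k = 3*n - 1"
begin

lemma exists_pair:
  assumes g: "good k n S" and sk: "sig S = k + 1"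
  shows "\<exists>t t' v. t \<in> S \<and> t' \<in> S \<and> t \<noteq> t' \<and> supp t \<inter> supp t' = {v} \<and>
           Min (supp t - {v}) < Min (supp t' - {v})"
proof -
  note sq = sq_case[OF g n1 kn sk]
  have fS: "finite S" using fS[OF g n1 kn] .
  have "\<exists>s\<in>S. \<exists>s'\<in>S. s \<noteq> s' \<and> supp s \<inter> supp s' \<noteq> {}"
  proof (rule ccontr)
    assume "\<not> (\<exists>s\<in>S. \<exists>s'\<in>S. s \<noteq> s' \<and> supp s \<inter> supp s' \<noteq> {})"
    then have "card (\<Union>s\<in>S. supp s) = (\<Sum>s\<in>S. card (supp s))"
      by (intro card_UN_disjoint) (auto simp: fS)
    then show False using Usupp[OF g n1 kn] sk by (simp add: sig_def)
  qed
  then obtain s s' where ss: "s \<in> S" "s' \<in> S" "s \<noteq> s'" "supp s \<inter> supp s' \<noteq> {}" by blast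
  have "card (supp s \<inter> supp s') \<le> 1" using sq(2) ss(1-3) by blast
  moreover have "card (supp s \<inter> supp s') \<noteq> 0" using ss(4) by simp
  ultimately have "card (supp s \<inter> supp s') = 1" by linarith
  then obtain v where v: "supp s \<inter> supp s' = {v}" by (auto simp: card_Suc_eq)
  have vs: "v \<in> supp s" "v \<in> supp s'" using v by auto
  have c: "card (supp s - {v}) = 2" "card (supp s' - {v}) = 2" using sq(1) ss(1,2) vs by simp_all
  have dj: "(supp s - {v}) \<inter> (supp s' - {v}) = {}" using v by auto
  have "Min (supp s - {v}) \<in> supp s - {v}" "Min (supp s' - {v}) \<in> supp s' - {v}"
    using card2_props c by blast+
  then have "Min (supp s - {v}) \<noteq> Min (supp s' - {v})" using dj by auto
  then show ?thesis
  proof (cases "Min (supp s - {v}) < Min (supp s' - {v})")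
    case True
    then show ?thesis using ss v by blast
  next
    case False
    then have "Min (supp s' - {v}) < Min (supp s - {v})" using \<open>Min (supp s - {v}) \<noteq> _\<close> by simp
    moreover have "supp s' \<inter> supp s = {v}" using v by auto
    ultimately show ?thesis using ss by blast
  qed
qed

lemma FB_surj:
  assumes g: "good k n S" and sk: "sig S = k + 1"
  shows "S \<in> FB k ` DB k"
proof -
  note gS' = gS[OF g n1 kn]
  have fS: "finite S" using fS[OF g n1 kn] .
  note sq = sq_case[OF g n1 kn sk]
  obtain t t' v where tt: "t \<in> S" "t' \<in> S" "t \<noteq> t'" "supp t \<inter> supp t' = {v}"
    "Min (supp t - {v}) < Min (supp t' - {v})"
    using exists_pair[OF g sk] by blast
  define P1 where "P1 = supp t - {v}"
  define P2 where "P2 = supp t' - {v}"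
  define R where "R = S - {t, t'}"
  define U1 where "U1 = supp t \<union> supp t'"
  define U2 where "U2 = (\<Union>r\<in>R. supp r)"
  have vt: "v \<in> supp t" "v \<in> supp t'" using tt(4) by auto
  have st: "supp t = insert v P1" "supp t' = insert v P2" using vt by (auto simp: P1_def P2_def)
  have c3: "card (supp t) = 3" "card (supp t') = 3" using sq(1) tt(1,2) by auto
  have cP: "card P1 = 2" "card P2 = 2" using c3 vt by (simp_all add: P1_def P2_def)
  have dj: "P1 \<inter> P2 = {}" using tt(4) by (auto simp: P1_def P2_def)
  have U1e: "U1 = insert v (P1 \<union> P2)" using st by (auto simp: U1_def)
  have cU1: "card U1 = 5"
    using card_Un_Int[of "supp t" "supp t'"] c3 tt(4) by (simp add: U1_def)
  have St: "S = insert t (insert t' R)" using tt(1,2) by (auto simp: R_def)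
  have fR: "finite R" using fS by (simp add: R_def)
  have tR: "t \<notin> R" "t' \<notin> R" by (auto simp: R_def)
  have cSR: "card S = card R + 2" using St fR tR tt(3) by simp
  have cR: "card R = n - 2" using cSR gS'(3) by simp
  have n2: "n \<ge> 2" using cSR gS'(3) by simp
  have sR: "(\<Sum>r\<in>R. card (supp r)) = 3 * (n - 2)"
  proof -
    have "(\<Sum>r\<in>R. card (supp r)) = (\<Sum>r\<in>R. 3)"
      using sq(1) by (intro sum.cong) (auto simp: R_def)
    then show ?thesis using cR by simp
  qed
  have U2le: "card U2 \<le> 3 * (n - 2)" using card_UN_le[OF fR, of supp] sR by (simp add: U2_def)
  have Uall: "U1 \<union> U2 = {..<k}" using Usupp[OF g n1 kn] St by (auto simp: U1_def U2_def)
  have fU: "finite U1" "finite U2" using fR by (auto simp: U1_def U2_def)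
  have "card (U1 \<union> U2) + card (U1 \<inter> U2) = card U1 + card U2" using card_Un_Int[OF fU] by simp
  then have eqs: "card (U1 \<inter> U2) = 0" "card U2 = 3 * (n - 2)"
    using Uall cU1 U2le kn n2 by auto
  have U12: "U1 \<inter> U2 = {}" using eqs(1) fU by simp
  have Rdisj: "\<And>r r'. r \<in> R \<Longrightarrow> r' \<in> R \<Longrightarrow> r \<noteq> r' \<Longrightarrow> supp r \<inter> supp r' = {}"
  proof -
    fix r r' assume rr: "r \<in> R" "r' \<in> R" "r \<noteq> r'"
    have "card (\<Union>x\<in>R. supp x) + card (supp r \<inter> supp r') \<le> (\<Sum>x\<in>R. card (supp x))"
      by (rule overlap_bound) (use fR rr in auto)
    then have "card (supp r \<inter> supp r') = 0" using eqs(2) sR by (simp add: U2_def)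
    then show "supp r \<inter> supp r' = {}" by simp
  qed
  define Q where "Q = supp ` R"
  have vk: "v < k" using vt supp_sub[of t] lenS[OF g n1 kn tt(1)] by auto
  have sk1: "supp t \<subseteq> {..<k}" "supp t' \<subseteq> {..<k}"
    using supp_sub lenS[OF g n1 kn] tt(1,2) by auto
  have P1s: "P1 \<subseteq> {..<k} - {v}" using sk1 by (auto simp: P1_def)
  have P2s: "P2 \<subseteq> {..<k} - {v} - P1" using sk1 dj by (auto simp: P2_def)
  have Qc: "Q \<in> T3 ({..<k} - insert v (P1 \<union> P2))"
    unfolding T3_def
  proof (intro CollectI conjI ballI impI)
    show "\<Union>Q = {..<k} - insert v (P1 \<union> P2)"
      using Uall U12 unfolding U1e[symmetric] Q_def U2_def by blast
    fix B assume "B \<in> Q"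
    then show "card B = 3" using sq(1) by (auto simp: Q_def R_def)
  next
    fix B B' assume BB: "B \<in> Q" "B' \<in> Q" "B \<noteq> B'"
    then obtain r r' where "r \<in> R" "r' \<in> R" "B = supp r" "B' = supp r'" unfolding Q_def by auto
    moreover then have "r \<noteq> r'" using BB by auto
    ultimately show "B \<inter> B' = {}" using Rdisj by blast
  qed
  have mem: "(v, (P1, P2), Q) \<in> DB k"
    using vk P1s P2s cP tt(5) Qc by (simp add: DB_def[OF n1 kn] LP_def Ps_def P1_def P2_def)
  have sqf: "\<And>s. s \<in> S \<Longrightarrow> ind k (supp s) = s"
  proof -
    fix s assume s: "s \<in> S"
    then have c: "card (supp s) = deg s" using sq(1) gS'(2) by simp
    have l: "length s = k" using lenS[OF g n1 kn] s by simp
    show "ind k (supp s) = s" by (rule sqfree_ind[OF l c])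
  qed
  have "FB k (v, (P1, P2), Q) = ind k ` Xf v P1 P2 Q" by (simp add: FB_def[OF n1 kn])
  also have "Xf v P1 P2 Q = supp ` S" unfolding Xf_def St Q_def st[symmetric] by simp
  also have "ind k ` supp ` S = S" using sqf by (simp add: image_image)
  finally show ?thesis using mem by (metis image_eqI)
qed

lemma caseB_count: "2 * card {S. good k n S \<and> sig S = k + 1}
    = k * (((k - 1) choose 2) * ((k - 3) choose 2)) * tp (k - 5)"
proof -
  have "FB k ` DB k = {S. good k n S \<and> sig S = k + 1}"
    using FB_good[OF n1 kn] FB_surj by blast
  then show ?thesis using card_image[OF FB_inj[OF n1 kn]] card_DB[OF n1 kn] by simp
qed

end

lemma two_choose: "2 * (n choose 2) = n * (n - 1)"
proof (induction n)
  case 0 then show ?case by simp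
next
  case (Suc n)
  have "Suc n choose 2 = (n choose 1) + (n choose 2)"
    by (metis Suc_1 binomial_Suc_Suc)
  then show ?case using Suc by (cases n) (simp_all add: algebra_simps)
qed

lemma fact3: "fact (3 * m + 3) = (3*m+3) * (3*m+2) * (3*m+1) * (fact (3*m) :: nat)"
proof -
  have e: "3 * m + 3 = Suc (Suc (Suc (3*m)))" by simp
  show ?thesis unfolding e by (simp only: fact_Suc) (simp add: algebra_simps)
qed

lemma arithA:
  assumes "n \<ge> 1"
  shows "real ((3*n-1) * (3*n-1-1) * tp (3*n-1-2)) = 2 * (fact (3*n) / (6 ^ n * fact n))"
proof -
  obtain m where m: "n = Suc m" using assms by (cases n) auto
  have e: "3*n-1 = 3*m+2" "3*n-1-1 = 3*m+1" "3*n-1-2 = 3*m" "3*n = 3*m+3" using m by simp_all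
  have N: "(3*m+2) * (3*m+1) * tp (3*m) * (6^n * fact n) = 2 * (fact (3*m+3) :: nat)"
  proof -
    have "(3*m+2) * (3*m+1) * tp (3*m) * (6^n * fact n)
        = (3*m+2) * (3*m+1) * (6 * (m+1)) * (tp (3*m) * 6^m * fact m)"
      using m by (simp add: algebra_simps)
    also have "... = (3*m+2) * (3*m+1) * (6 * (m+1)) * fact (3*m)" by (simp add: tp_closed)
    also have "... = 2 * fact (3*m+3)" unfolding fact3 by (simp add: algebra_simps)
    finally show ?thesis .
  qed
  have R: "real ((3*m+2) * (3*m+1) * tp (3*m)) * (6^n * fact n) = 2 * fact (3*m+3)"
    using arg_cong[OF N, of real] by (simp add: of_nat_fact)
  have pos: "(6::real)^n * fact n > 0" by simp
  show ?thesis unfolding e using R pos by (simp add: field_simps)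
qed

lemma arithB:
  assumes n1: "n \<ge> 1" and c: "2 * c = (3*n-1) * (((3*n-1-1) choose 2) * ((3*n-1-3) choose 2)) * tp (3*n-1-5)"
  shows "real c = 3 * (real n - 1) / 2 * (fact (3*n) / (6 ^ n * fact n))"
proof (cases "n = 1")
  case True
  then have "c = 0" using c by simp
  then show ?thesis using True by simp
next
  case False
  then obtain m where m: "n = m + 2" using n1 by (metis add.commute le_Suc_ex One_nat_def Suc_1 add_Suc_shift le_neq_implies_less less_Suc_eq_le plus_1_eq_Suc)
  have e: "3*n-1 = 3*m+5" "3*n-1-1 = 3*m+4" "3*n-1-3 = 3*m+2" "3*n-1-5 = 3*m" using m by simp_all
  have f6: "fact (3*m+6) = (3*m+6)*(3*m+5)*(3*m+4) * (fact (3*m+3) :: nat)"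
  proof -
    have e: "3 * m + 6 = Suc (Suc (Suc (3*m+3)))" by simp
    show ?thesis unfolding e by (simp only: fact_Suc) (simp add: algebra_simps)
  qed
  have c4: "4 * (((3*m+4) choose 2) * ((3*m+2) choose 2)) = (3*m+4)*(3*m+3)*((3*m+2)*(3*m+1))"
  proof -
    have "4 * (((3*m+4) choose 2) * ((3*m+2) choose 2)) = (2 * ((3*m+4) choose 2)) * (2 * ((3*m+2) choose 2))"
      by simp
    also have "... = ((3*m+4) * (3*m+4-1)) * ((3*m+2) * (3*m+2-1))" by (simp only: two_choose)
    also have "... = (3*m+4)*(3*m+3)*((3*m+2)*(3*m+1))"
    proof -
      have "3*m+4-1 = 3*m+3" "3*m+2-1 = 3*m+1" by simp_all
      then show ?thesis by (simp only: mult.assoc)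
    qed
    finally show ?thesis .
  qed
  have N: "4 * (2 * c) * (6^n * fact n) = 12 * (m+1) * (fact (3*n) :: nat)"
  proof -
    have "4 * (2 * c) * (6^n * fact n)
        = (3*m+5) * (4 * (((3*m+4) choose 2) * ((3*m+2) choose 2))) * (36 * (m+2) * (m+1)) * (tp (3*m) * 6^m * fact m)"
      unfolding c e using m by (simp add: algebra_simps power_add)
    also have "... = (3*m+5) * ((3*m+4)*(3*m+3)*((3*m+2)*(3*m+1))) * (36 * (m+2) * (m+1)) * fact (3*m)"
      by (simp only: c4 tp_closed)
    also have "... = 12 * (m+1) * fact (3*m+6)" unfolding f6 fact3 by (simp add: algebra_simps)
    finally show ?thesis using m by (simp add: algebra_simps)
  qed
  have R: "8 * real c * (6^n * fact n) = 12 * (real m + 1) * fact (3*n)"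
    using arg_cong[OF N, of real] by (simp add: of_nat_fact)
  have pos: "(6::real)^n * fact n > 0" by simp
  have "real n - 1 = real m + 1" using m by simp
  then show ?thesis using R pos by (simp add: field_simps)
qed

theorem proposition5p2:
  fixes n :: nat
  assumes "n \<ge> 1"
  shows "(\<forall>P. is_partition (3*n-1) P \<and> hilb P 1 = 3*n-1 \<and> socle_type_0003 P n \<longrightarrow>
            plength P = 3 \<and>
            (map (hilb P) [0..<4] = [1, 3*n-1, 3*n, n] \<or>
             map (hilb P) [0..<4] = [1, 3*n-1, 3*n-1, n]))
       \<and> real (alpha (3*n-1) (3*n) n 3)
           = 3 * (real n - 1) / 2 * (fact (3*n) / (6 ^ n * fact n))
       \<and> real (alpha (3*n-1) (3*n-1) n 3)
           = 2 * (fact (3*n) / (6 ^ n * fact n))"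
proof -
  define k where "k = 3*n - 1"
  have kn: "k = 3*n - 1" by (simp add: k_def)
  note n1 = assms
  have k1: "3*n = k + 1" using n1 by (simp add: k_def)
  have P1: "\<forall>P. is_partition (3*n-1) P \<and> hilb P 1 = 3*n-1 \<and> socle_type_0003 P n \<longrightarrow>
            plength P = 3 \<and>
            (map (hilb P) [0..<4] = [1, 3*n-1, 3*n, n] \<or>
             map (hilb P) [0..<4] = [1, 3*n-1, 3*n-1, n])"
  proof (intro allI impI)
    fix P assume h: "is_partition (3*n-1) P \<and> hilb P 1 = 3*n-1 \<and> socle_type_0003 P n"
    then have "plength P = 3 \<and> (map (hilb P) [0..<4] = [1, k, k, n] \<or> map (hilb P) [0..<4] = [1, k, k + 1, n])"
      using part1[OF n1 kn, of P] unfolding k_def by blast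
    moreover have e': "3*n-1+1 = 3*n" using n1 by simp
    ultimately have "plength P = 3 \<and> (map (hilb P) [0..<4] = [1, 3*n-1, 3*n-1, n] \<or> map (hilb P) [0..<4] = [1, 3*n-1, 3*n, n])"
      unfolding k_def by (simp only: e')
    then show "plength P = 3 \<and>
            (map (hilb P) [0..<4] = [1, 3*n-1, 3*n, n] \<or>
             map (hilb P) [0..<4] = [1, 3*n-1, 3*n-1, n])"
      by blast
  qed
  have B: "2 * alpha k (k+1) n 3 = k * (((k - 1) choose 2) * ((k - 3) choose 2)) * tp (k - 5)"
    using alpha_eq[OF n1 kn, of "k+1"] caseB_count[OF n1 kn] by simp
  have A: "alpha k k n 3 = k * (k - 1) * tp (k - 2)"
    using alpha_eq[OF n1 kn, of k] caseA_count[OF n1 kn] by simp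
  have "real (alpha (3*n-1) (3*n) n 3) = 3 * (real n - 1) / 2 * (fact (3*n) / (6 ^ n * fact n))"
    using arithB[OF n1, of "alpha k (k+1) n 3"] B unfolding k1 unfolding k_def
    by (simp add: diff_diff_add)
  moreover have "real (alpha (3*n-1) (3*n-1) n 3) = 2 * (fact (3*n) / (6 ^ n * fact n))"
    using arithA[OF n1] A unfolding k_def by (simp add: diff_diff_add)
  ultimately show ?thesis using P1 by blast
qed

end
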